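(* Let $1<p<\infty$, $\frac1p+\frac1q=1$, and suppose $(X,\mathcal{A},\mu|_{\mathcal{A}})$ is purely atomic, with $X=\bigcup_{n\ge1}A_n$ for pairwise disjoint $\mathcal{A}$-atoms $A_n$. Then the bounded WCE operator $T=M_wEM_u$ on $L^p(\Sigma)$ is nuclear if and only if $$\sum_{n=1}^\infty \big(E(|w|^p)(A_n)\big)^{1/p}\big(E(|u|^q)(A_n)\big)^{1/q}<\infty .$$
   Context: $(X,\Sigma,\mu)$ is a complete $\sigma$-finite measure space and $\mathcal{A}\subseteq\Sigma$ is a sub-$\sigma$-algebra with $(X,\mathcal{A},\mu|_{\mathcal{A}})$ $\sigma$-finite; $E$ is the conditional expectation with respect to $\mathcal{A}$, and $Tf=wE(uf)$. For $1<p<\infty$, $T$ is bounded on $L^p(\Sigma)$ iff $(E|w|^p)^{1/p}(E|u|^q)^{1/q}\in L^\infty(\mathcal{A})$, and then $\|T\|$ equals its $L^\infty$-norm. An $\mathcal{A}$-atom is a set $A\in\mathcal{A}$ with $\mu(A)>0$ such that every $F\in\mathcal{A}$, $F\subseteq A$, has $\mu(F)=0$ or $\mu(F)=\mu(A)$; an $\mathcal{A}$-measurable function is a.e. constant on each $\mathcal{A}$-atom, and for an $\mathcal{A}$-measurable $g$, $g(A_n)$ denotes this constant value (so e.g. $E(|w|^p)(A_n)=\frac{1}{\mu(A_n)}\int_{A_n}|w|^p\,d\mu$). A bounded operator is nuclear if $Tx=\sum_n f_n(x)y_n$ with $f_n$ in the dual, and $\sum_n\|f_n\|\|y_n\|<\infty$.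 *)

theory Defs
  imports "HOL-Probability.Probability"
begin

text \<open>Real L^p spaces over a measure space M, represented by measurable real functions
  (elements of L^p are a.e.-classes; all notions below are invariant under a.e. equality).\<close>

definition memLp :: "real \<Rightarrow> 'a measure \<Rightarrow> ('a \<Rightarrow> real) \<Rightarrow> bool" where
  "memLp p M f \<longleftrightarrow> f \<in> borel_measurable M \<and> integrable M (\<lambda>x. \<bar>f x\<bar> powr p)"

definition Lp_norm :: "real \<Rightarrow> 'a measure \<Rightarrow> ('a \<Rightarrow> real) \<Rightarrow> real" where
  "Lp_norm p M f = (\<integral>x. \<bar>f x\<bar> powr p \<partial>M) powr (1 / p)"

definition bounded_op_Lp :: "real \<Rightarrow> 'a measure \<Rightarrow> (('a \<Rightarrow> real) \<Rightarrow> ('a \<Rightarrow> real)) \<Rightarrow> bool" where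
  "bounded_op_Lp p M T \<longleftrightarrow>
     (\<forall>f. memLp p M f \<longrightarrow> memLp p M (T f)) \<and>
     (\<forall>f g. memLp p M f \<longrightarrow> memLp p M g \<longrightarrow> (AE x in M. T (\<lambda>y. f y + g y) x = T f x + T g x)) \<and>
     (\<forall>c f. memLp p M f \<longrightarrow> (AE x in M. T (\<lambda>y. c * f y) x = c * T f x)) \<and>
     (\<exists>C. \<forall>f. memLp p M f \<longrightarrow> Lp_norm p M (T f) \<le> C * Lp_norm p M f)"

definition Lp_functional :: "real \<Rightarrow> 'a measure \<Rightarrow> (('a \<Rightarrow> real) \<Rightarrow> real) \<Rightarrow> bool" where
  "Lp_functional p M \<phi> \<longleftrightarrow>
     (\<forall>f g. memLp p M f \<longrightarrow> memLp p M g \<longrightarrow> \<phi> (\<lambda>y. f y + g y) = \<phi> f + \<phi> g) \<and>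
     (\<forall>c f. memLp p M f \<longrightarrow> \<phi> (\<lambda>y. c * f y) = c * \<phi> f) \<and>
     (\<exists>C. \<forall>f. memLp p M f \<longrightarrow> \<bar>\<phi> f\<bar> \<le> C * Lp_norm p M f)"

definition dual_norm :: "real \<Rightarrow> 'a measure \<Rightarrow> (('a \<Rightarrow> real) \<Rightarrow> real) \<Rightarrow> real" where
  "dual_norm p M \<phi> = Sup {\<bar>\<phi> f\<bar> | f. memLp p M f \<and> Lp_norm p M f \<le> 1}"

definition nuclear_Lp :: "real \<Rightarrow> 'a measure \<Rightarrow> (('a \<Rightarrow> real) \<Rightarrow> ('a \<Rightarrow> real)) \<Rightarrow> bool" where
  "nuclear_Lp p M T \<longleftrightarrow> bounded_op_Lp p M T \<and>
     (\<exists>\<phi> :: nat \<Rightarrow> ('a \<Rightarrow> real) \<Rightarrow> real. \<exists>y :: nat \<Rightarrow> 'a \<Rightarrow> real.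
        (\<forall>n. Lp_functional p M (\<phi> n)) \<and> (\<forall>n. memLp p M (y n)) \<and>
        summable (\<lambda>n. dual_norm p M (\<phi> n) * Lp_norm p M (y n)) \<and>
        (\<forall>f. memLp p M f \<longrightarrow>
           (\<lambda>N. Lp_norm p M (\<lambda>x. T f x - (\<Sum>k<N. \<phi> k f * y k x))) \<longlonglongrightarrow> 0))"

definition WCE :: "'a measure \<Rightarrow> 'a measure \<Rightarrow> ('a \<Rightarrow> real) \<Rightarrow> ('a \<Rightarrow> real)
                   \<Rightarrow> ('a \<Rightarrow> real) \<Rightarrow> ('a \<Rightarrow> real)" where
  "WCE M F w u f = (\<lambda>x. w x * real_cond_exp M F (\<lambda>y. u y * f y) x)"

definition F_atom :: "'a measure \<Rightarrow> 'a measure \<Rightarrow> 'a set \<Rightarrow> bool" where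
  "F_atom M F A \<longleftrightarrow> A \<in> sets F \<and> emeasure M A > 0 \<and>
     (\<forall>B\<in>sets F. B \<subseteq> A \<longrightarrow> emeasure M B = 0 \<or> emeasure M B = emeasure M A)"

text \<open>Value of E(g) on an F-atom A (g \<ge> 0): (1/\<mu>(A)) \<integral>_A g d\<mu>.\<close>
definition cond_exp_atom :: "'a measure \<Rightarrow> ('a \<Rightarrow> real) \<Rightarrow> 'a set \<Rightarrow> real" where
  "cond_exp_atom M g A = enn2real (set_nn_integral M A (\<lambda>x. ennreal (g x)) / emeasure M A)"

end

theory Submission
  imports Defs
begin


lemma young_ineq:
  fixes a b p q :: real
  assumes "a \<ge> 0" "b \<ge> 0" "p > 0" "q > 0" "1/p + 1/q = 1"
  shows "a * b \<le> a powr p / p + b powr q / q"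
proof (cases "a = 0 \<or> b = 0")
  case True
  then show ?thesis using assms by auto
next
  case False
  then have a: "a > 0" and b: "b > 0" using assms by auto
  define t where "t = 1/q"
  have tt: "t = 1 - 1/p" using assms unfolding t_def by simp
  have "1/p > 0" "1/q > 0" using assms by auto
  then have t: "0 \<le> t" "t \<le> 1" "1 - t = 1/p" using tt unfolding t_def by auto
  have "exp ((1 - t) *\<^sub>R (p * ln a) + t *\<^sub>R (q * ln b)) \<le> (1 - t) * exp (p * ln a) + t * exp (q * ln b)"
    by (rule convex_onD[OF exp_convex]) (use t in auto)
  moreover have "(1 - t) *\<^sub>R (p * ln a) + t *\<^sub>R (q * ln b) = ln a + ln b"
  proof -
    have h1: "q * t = 1" using assms unfolding t_def by auto
    have h2: "(1 - t) * p = 1" unfolding t(3) using assms by auto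
    have "(1 - t) * (p * ln a) = ln a" using h2 by (metis mult.assoc mult_1)
    moreover have "t * (q * ln b) = ln b" using h1 by (metis mult.assoc mult.commute mult_1)
    ultimately show ?thesis unfolding real_scaleR_def by linarith
  qed
  moreover have "exp (ln a + ln b) = a * b" using a b by (simp add: exp_add)
  moreover have "exp (p * ln a) = a powr p" "exp (q * ln b) = b powr q" using a b by (simp_all add: powr_def)
  ultimately show ?thesis using t unfolding t_def by (simp add: field_simps)
qed

lemma conj_exp:
  fixes p q :: real assumes "1 < p" "1/p + 1/q = 1"
  shows "q > 1" "q = p / (p - 1)" "(q - 1) * p = q" "(p - 1) * q = p" "1/q = 1 - 1/p"
proof -
  have "1/q = 1 - 1/p" using assms by simp
  moreover have "0 < 1 - 1/p" "1 - 1/p < 1" using assms by (auto simp: field_simps)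
  ultimately have "0 < 1/q" "1/q < 1" by auto
  then have "q > 0" by simp
  then show "q > 1" using \<open>1/q < 1\<close> by (simp add: divide_less_eq)
  show "1/q = 1 - 1/p" by fact
  then have "q = 1 / (1 - 1/p)" by (metis divide_divide_eq_right div_by_1 mult_1 nonzero_mult_div_cancel_left \<open>0 < 1/q\<close> less_irrefl divide_eq_0_iff)
  also have "\<dots> = p / (p - 1)" using assms by (simp add: field_simps)
  finally show q: "q = p / (p - 1)" .
  show "(q - 1) * p = q" "(p - 1) * q = p" unfolding q using assms by (auto simp: field_simps)
qed

lemma holder:
  fixes f g :: "'a \<Rightarrow> real" and p q :: real
  assumes p: "1 < p" "1/p + 1/q = 1"
    and [measurable]: "f \<in> borel_measurable M" "g \<in> borel_measurable M"
    and fi: "integrable M (\<lambda>x. \<bar>f x\<bar> powr p)" and gi: "integrable M (\<lambda>x. \<bar>g x\<bar> powr q)"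
  shows "integrable M (\<lambda>x. f x * g x)"
    and "(\<integral>x. \<bar>f x * g x\<bar> \<partial>M) \<le> (\<integral>x. \<bar>f x\<bar> powr p \<partial>M) powr (1/p) * (\<integral>x. \<bar>g x\<bar> powr q \<partial>M) powr (1/q)"
proof -
  have q: "q > 1" using conj_exp[OF p] by auto
  have yb: "\<bar>f x * g x\<bar> \<le> \<bar>f x\<bar> powr p / p + \<bar>g x\<bar> powr q / q" for x
    using young_ineq[of "\<bar>f x\<bar>" "\<bar>g x\<bar>" p q] p q by (simp add: abs_mult)
  have ib: "integrable M (\<lambda>x. \<bar>f x\<bar> powr p / p + \<bar>g x\<bar> powr q / q)"
    using fi gi by auto
  show int: "integrable M (\<lambda>x. f x * g x)"
  proof (rule Bochner_Integration.integrable_bound[OF ib])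
    show "AE x in M. norm (f x * g x) \<le> norm (\<bar>f x\<bar> powr p / p + \<bar>g x\<bar> powr q / q)"
    proof (rule AE_I2)
      fix x
      have "norm (f x * g x) \<le> \<bar>f x\<bar> powr p / p + \<bar>g x\<bar> powr q / q" using yb[of x] by simp
      also have "\<dots> \<le> norm (\<bar>f x\<bar> powr p / p + \<bar>g x\<bar> powr q / q)" by simp
      finally show "norm (f x * g x) \<le> norm (\<bar>f x\<bar> powr p / p + \<bar>g x\<bar> powr q / q)" .
    qed
  qed simp
  define Fp where "Fp = (\<integral>x. \<bar>f x\<bar> powr p \<partial>M)"
  define Gq where "Gq = (\<integral>x. \<bar>g x\<bar> powr q \<partial>M)"
  have Fp0: "Fp \<ge> 0" "Gq \<ge> 0" unfolding Fp_def Gq_def by auto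
  show "(\<integral>x. \<bar>f x * g x\<bar> \<partial>M) \<le> Fp powr (1/p) * Gq powr (1/q)"
  proof (cases "Fp = 0 \<or> Gq = 0")
    case True
    then have "AE x in M. \<bar>f x\<bar> powr p = 0 \<or> \<bar>g x\<bar> powr q = 0"
    proof
      assume "Fp = 0"
      then have "AE x in M. \<bar>f x\<bar> powr p = 0" unfolding Fp_def
        using integral_nonneg_eq_0_iff_AE[OF fi] by auto
      then show ?thesis by auto
    next
      assume "Gq = 0"
      then have "AE x in M. \<bar>g x\<bar> powr q = 0" unfolding Gq_def
        using integral_nonneg_eq_0_iff_AE[OF gi] by auto
      then show ?thesis by auto
    qed
    then have "AE x in M. \<bar>f x * g x\<bar> = 0" by eventually_elim auto
    then have "(\<integral>x. \<bar>f x * g x\<bar> \<partial>M) = 0" by (simp add: integral_eq_zero_AE)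
    then show ?thesis using Fp0 by simp
  next
    case False
    then have Fp: "Fp > 0" "Gq > 0" using Fp0 by auto
    define \<alpha> where "\<alpha> = Fp powr (1/p)"
    define \<beta> where "\<beta> = Gq powr (1/q)"
    have ab: "\<alpha> > 0" "\<beta> > 0" unfolding \<alpha>_def \<beta>_def using Fp by auto
    have ap: "\<alpha> powr p = Fp" "\<beta> powr q = Gq" unfolding \<alpha>_def \<beta>_def using Fp p q
      by (auto simp: powr_powr)
    have pt: "\<bar>f x * g x\<bar> / (\<alpha> * \<beta>) \<le> \<bar>f x\<bar> powr p / (p * Fp) + \<bar>g x\<bar> powr q / (q * Gq)" for x
    proof -
      have "\<bar>f x * g x\<bar> / (\<alpha> * \<beta>) = (\<bar>f x\<bar> / \<alpha>) * (\<bar>g x\<bar> / \<beta>)" by (simp add: abs_mult)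
      also have "\<dots> \<le> (\<bar>f x\<bar> / \<alpha>) powr p / p + (\<bar>g x\<bar> / \<beta>) powr q / q"
        by (rule young_ineq) (use ab p q in auto)
      also have "\<dots> = \<bar>f x\<bar> powr p / (p * Fp) + \<bar>g x\<bar> powr q / (q * Gq)"
        using ab by (simp add: powr_divide ap mult.commute)
      finally show ?thesis .
    qed
    have "(\<integral>x. \<bar>f x * g x\<bar> / (\<alpha> * \<beta>) \<partial>M) \<le> (\<integral>x. \<bar>f x\<bar> powr p / (p * Fp) + \<bar>g x\<bar> powr q / (q * Gq) \<partial>M)"
      by (rule integral_mono) (use int fi gi pt in auto)
    also have "\<dots> = Fp / (p * Fp) + Gq / (q * Gq)"
      using fi gi by (simp add: Fp_def Gq_def)
    also have "\<dots> = 1" using Fp p by simp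
    finally have "(\<integral>x. \<bar>f x * g x\<bar> \<partial>M) / (\<alpha> * \<beta>) \<le> 1" by simp
    then show ?thesis using ab unfolding \<alpha>_def \<beta>_def by (simp add: divide_le_eq)
  qed
qed

lemma abs_powr_mult: "\<bar>c * x\<bar> powr p = \<bar>c\<bar> powr p * \<bar>x\<bar> powr p" for c x p :: real
  by (simp add: abs_mult powr_mult)

lemma memLp_zero: "p > 0 \<Longrightarrow> memLp p M (\<lambda>x. 0)"
  unfolding memLp_def by simp

lemma Lp_norm_zero: "p > 0 \<Longrightarrow> Lp_norm p M (\<lambda>x. 0) = 0"
  unfolding Lp_norm_def by simp

lemma Lp_norm_nonneg: "Lp_norm p M f \<ge> 0"
  unfolding Lp_norm_def by simp

lemma memLp_cmult: assumes "memLp p M f" shows "memLp p M (\<lambda>x. c * f x)"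
proof -
  have [measurable]: "f \<in> borel_measurable M" using assms unfolding memLp_def by auto
  show ?thesis using assms unfolding memLp_def by (simp add: abs_powr_mult)
qed

lemma Lp_norm_cmult:
  assumes "p > 0" shows "Lp_norm p M (\<lambda>x. c * f x) = \<bar>c\<bar> * Lp_norm p M f"
proof -
  have "Lp_norm p M (\<lambda>x. c * f x) = (\<bar>c\<bar> powr p * (\<integral>x. \<bar>f x\<bar> powr p \<partial>M)) powr (1/p)"
    unfolding Lp_norm_def by (simp add: abs_powr_mult)
  also have "\<dots> = (\<bar>c\<bar> powr p) powr (1/p) * (\<integral>x. \<bar>f x\<bar> powr p \<partial>M) powr (1/p)"
    by (simp add: powr_mult)
  also have "(\<bar>c\<bar> powr p) powr (1/p) = \<bar>c\<bar>" using assms by (simp add: powr_powr)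
  finally show ?thesis unfolding Lp_norm_def by simp
qed

lemma powr_add_bound:
  fixes a b p :: real assumes "p > 0"
  shows "\<bar>a + b\<bar> powr p \<le> 2 powr p * (\<bar>a\<bar> powr p + \<bar>b\<bar> powr p)"
proof -
  have "\<bar>a + b\<bar> powr p \<le> (2 * max \<bar>a\<bar> \<bar>b\<bar>) powr p"
    by (rule powr_mono2) (use assms in auto)
  also have "\<dots> = 2 powr p * (max \<bar>a\<bar> \<bar>b\<bar>) powr p" by (simp add: powr_mult)
  also have "(max \<bar>a\<bar> \<bar>b\<bar>) powr p \<le> \<bar>a\<bar> powr p + \<bar>b\<bar> powr p"
    by (cases "\<bar>a\<bar> \<le> \<bar>b\<bar>") (auto simp: max_def)
  then have "2 powr p * (max \<bar>a\<bar> \<bar>b\<bar>) powr p \<le> 2 powr p * (\<bar>a\<bar> powr p + \<bar>b\<bar> powr p)"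
    by (rule mult_left_mono) auto
  finally show ?thesis .
qed

lemma memLp_add:
  assumes "p > 0" "memLp p M f" "memLp p M g"
  shows "memLp p M (\<lambda>x. f x + g x)"
proof -
  have [measurable]: "f \<in> borel_measurable M" "g \<in> borel_measurable M" using assms unfolding memLp_def by auto
  have i: "integrable M (\<lambda>x. 2 powr p * (\<bar>f x\<bar> powr p + \<bar>g x\<bar> powr p))"
    using assms unfolding memLp_def by auto
  have "integrable M (\<lambda>x. \<bar>f x + g x\<bar> powr p)"
  proof (rule Bochner_Integration.integrable_bound[OF i])
    show "AE x in M. norm (\<bar>f x + g x\<bar> powr p) \<le> norm (2 powr p * (\<bar>f x\<bar> powr p + \<bar>g x\<bar> powr p))"
    proof (rule AE_I2)
      fix x
      have "norm (\<bar>f x + g x\<bar> powr p) \<le> 2 powr p * (\<bar>f x\<bar> powr p + \<bar>g x\<bar> powr p)"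
        using powr_add_bound[OF assms(1), of "f x" "g x"] by simp
      also have "\<dots> \<le> norm (2 powr p * (\<bar>f x\<bar> powr p + \<bar>g x\<bar> powr p))" by simp
      finally show "norm (\<bar>f x + g x\<bar> powr p) \<le> norm (2 powr p * (\<bar>f x\<bar> powr p + \<bar>g x\<bar> powr p))" .
    qed
  qed simp
  then show ?thesis unfolding memLp_def by simp
qed

lemma memLp_sum:
  fixes N :: nat
  assumes "p > 0" "\<And>k. memLp p M (y k)"
  shows "memLp p M (\<lambda>x. \<Sum>k<N. c k * y k x)"
proof (induction N)
  case 0
  then show ?case using memLp_zero[of p M, OF assms(1)] by simp
next
  case (Suc N)
  have "memLp p M (\<lambda>x. (\<Sum>k<N. c k * y k x) + c N * y N x)"
    by (rule memLp_add[OF assms(1) Suc memLp_cmult[OF assms(2)]])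
  then show ?case by simp
qed

lemma memLp_diff:
  assumes "p > 0" "memLp p M f" "memLp p M g"
  shows "memLp p M (\<lambda>x. f x - g x)"
  using memLp_add[OF assms(1,2) memLp_cmult[OF assms(3), of "-1"]] by simp

lemma memLp_mult_indicator:
  assumes "memLp p M f" "A \<in> sets M" "p > 0"
  shows "memLp p M (\<lambda>x. f x * indicator A x)"
    and "(\<integral>x. \<bar>f x * indicator A x\<bar> powr p \<partial>M) \<le> (\<integral>x. \<bar>f x\<bar> powr p \<partial>M)"
proof -
  have e: "\<bar>f x * indicator A x\<bar> powr p = \<bar>f x\<bar> powr p * indicator A x" for x
    using assms by (auto simp: indicator_def)
  have i: "integrable M (\<lambda>x. \<bar>f x\<bar> powr p * indicator A x)"
    using assms unfolding memLp_def by (intro integrable_real_mult_indicator) auto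
  show "memLp p M (\<lambda>x. f x * indicator A x)"
    using assms i unfolding memLp_def e by auto
  show "(\<integral>x. \<bar>f x * indicator A x\<bar> powr p \<partial>M) \<le> (\<integral>x. \<bar>f x\<bar> powr p \<partial>M)"
    unfolding e by (rule integral_mono[OF i]) (use assms in \<open>auto simp: memLp_def indicator_def\<close>)
qed

lemma dual_norm_props:
  assumes "Lp_functional p M \<phi>" "p > 0"
  shows "dual_norm p M \<phi> \<ge> 0"
    and "\<And>f. memLp p M f \<Longrightarrow> \<bar>\<phi> f\<bar> \<le> dual_norm p M \<phi> * Lp_norm p M f"
proof -
  obtain C where C: "\<And>f. memLp p M f \<Longrightarrow> \<bar>\<phi> f\<bar> \<le> C * Lp_norm p M f"
    using assms unfolding Lp_functional_def by blast
  define S where "S = {\<bar>\<phi> f\<bar> | f. memLp p M f \<and> Lp_norm p M f \<le> 1}"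
  have dn: "dual_norm p M \<phi> = Sup S" unfolding S_def dual_norm_def by simp
  have bdd: "bdd_above S"
  proof (rule bdd_aboveI)
    fix z assume "z \<in> S"
    then obtain f where f: "z = \<bar>\<phi> f\<bar>" "memLp p M f" "Lp_norm p M f \<le> 1" unfolding S_def by auto
    have "z \<le> C * Lp_norm p M f" using C f by auto
    also have "\<dots> \<le> max C 0 * Lp_norm p M f" by (rule mult_right_mono) (auto simp: Lp_norm_nonneg)
    also have "\<dots> \<le> max C 0 * 1" by (rule mult_left_mono) (use f in auto)
    finally show "z \<le> max C 0" by simp
  qed
  have z: "\<phi> (\<lambda>x. 0) = 0"
    using C[OF memLp_zero[of p M, OF assms(2)]] by (simp add: Lp_norm_zero[of p M, OF assms(2)])
  have z1: "memLp p M (\<lambda>x. 0)" "Lp_norm p M (\<lambda>x. 0) \<le> 1"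
    using memLp_zero[of p M, OF assms(2)] Lp_norm_zero[of p M, OF assms(2)] by auto
  have "0 \<in> S" unfolding S_def using z z1 by force
  then show nn: "dual_norm p M \<phi> \<ge> 0" unfolding dn using bdd by (rule cSup_upper)
  fix f assume f: "memLp p M f"
  show "\<bar>\<phi> f\<bar> \<le> dual_norm p M \<phi> * Lp_norm p M f"
  proof (cases "Lp_norm p M f = 0")
    case True
    then show ?thesis using C[OF f] by simp
  next
    case False
    define r where "r = Lp_norm p M f"
    have r: "r > 0" using False Lp_norm_nonneg[of p M f] unfolding r_def by auto
    have m: "memLp p M (\<lambda>x. (1/r) * f x)" using memLp_cmult[OF f] .
    have "Lp_norm p M (\<lambda>x. (1/r) * f x) = \<bar>1/r\<bar> * r" using Lp_norm_cmult[OF assms(2), of M "1/r" f] unfolding r_def by simp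
    then have "Lp_norm p M (\<lambda>x. (1/r) * f x) = 1" using r by simp
    moreover have "\<phi> (\<lambda>x. (1/r) * f x) = (1/r) * \<phi> f" using assms(1) f unfolding Lp_functional_def by blast
    ultimately have "\<bar>\<phi> f\<bar> / r \<in> S" using m r unfolding S_def by (auto intro!: exI[of _ "\<lambda>x. (1/r) * f x"] simp: abs_mult)
    then have "\<bar>\<phi> f\<bar> / r \<le> dual_norm p M \<phi>" unfolding dn using bdd by (rule cSup_upper)
    then show ?thesis using r unfolding r_def by (simp add: divide_le_eq mult.commute)
  qed
qed

lemma dual_norm_le:
  assumes "p > 0" "B \<ge> 0" "\<And>f. memLp p M f \<Longrightarrow> \<bar>\<phi> f\<bar> \<le> B * Lp_norm p M f"
  shows "dual_norm p M \<phi> \<le> B"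
  unfolding dual_norm_def
proof (rule cSup_least)
  show "{\<bar>\<phi> f\<bar> |f. memLp p M f \<and> Lp_norm p M f \<le> 1} \<noteq> {}"
  proof -
    have z1: "memLp p M (\<lambda>x. 0)" "Lp_norm p M (\<lambda>x. 0) \<le> 1"
      using memLp_zero[of p M, OF assms(1)] Lp_norm_zero[of p M, OF assms(1)] by auto
    then show ?thesis by blast
  qed
  fix z assume "z \<in> {\<bar>\<phi> f\<bar> |f. memLp p M f \<and> Lp_norm p M f \<le> 1}"
  then obtain f where f: "z = \<bar>\<phi> f\<bar>" "memLp p M f" "Lp_norm p M f \<le> 1" by auto
  have "z \<le> B * Lp_norm p M f" using assms f by auto
  also have "\<dots> \<le> B * 1" by (rule mult_left_mono) (use f assms in auto)
  finally show "z \<le> B" by simp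
qed



locale atom_setting =
  fixes M F :: "'a measure" and A :: "nat \<Rightarrow> 'a set"
  assumes sfs: "sigma_finite_subalgebra M F"
    and atom: "\<And>n. F_atom M F (A n)"
    and disj: "disjoint_family A"
    and cover: "(\<Union>n. A n) = space M"
begin

lemma subalg: "subalgebra M F"
  using sfs unfolding sigma_finite_subalgebra_def by auto

lemma sets_F_M: "sets F \<subseteq> sets M" and space_F: "space F = space M"
  using subalg unfolding subalgebra_def by auto

lemma A_F[measurable]: "A n \<in> sets F"
  using atom unfolding F_atom_def by auto

lemma A_M[measurable]: "A n \<in> sets M"
  using A_F sets_F_M by auto

lemma A_pos: "emeasure M (A n) > 0"
  using atom unfolding F_atom_def by auto

lemma A_fin: "emeasure M (A n) < \<infinity>"
proof -
  interpret S: sigma_finite_measure "restr_to_subalg M F"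
    using sfs unfolding sigma_finite_subalgebra_def by auto
  obtain Q :: "nat \<Rightarrow> 'a set" where Q: "range Q \<subseteq> sets (restr_to_subalg M F)"
    "(\<Union>i. Q i) = space (restr_to_subalg M F)" "\<And>i. emeasure (restr_to_subalg M F) (Q i) \<noteq> \<infinity>"
    using S.sigma_finite by metis
  have QF: "Q i \<in> sets F" for i using Q(1) sets_restr_to_subalg[OF subalg] by auto
  have Qfin: "emeasure M (Q i) \<noteq> \<infinity>" for i using Q(3)[of i] emeasure_restr_to_subalg[OF subalg QF] by simp
  have QU: "(\<Union>i. Q i) = space M" using Q(2) space_restr_to_subalg by simp
  have "\<exists>i. emeasure M (A n \<inter> Q i) \<noteq> 0"
  proof (rule ccontr)
    assume "\<not> ?thesis"
    then have "\<And>i. A n \<inter> Q i \<in> null_sets M" using QF sets_F_M by (auto intro!: null_setsI)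
    then have "(\<Union>i. A n \<inter> Q i) \<in> null_sets M" by (rule null_sets_UN)
    moreover have "(\<Union>i. A n \<inter> Q i) = A n" using QU sets.sets_into_space[OF A_M[of n]] by auto
    ultimately show False using A_pos[of n] by auto
  qed
  then obtain i where i: "emeasure M (A n \<inter> Q i) \<noteq> 0" by auto
  have "A n \<inter> Q i \<in> sets F" using QF A_F by auto
  then have "emeasure M (A n \<inter> Q i) = emeasure M (A n)" using atom[of n] i unfolding F_atom_def by auto
  moreover have "emeasure M (A n \<inter> Q i) \<le> emeasure M (Q i)"
    by (rule emeasure_mono) (use QF sets_F_M in auto)
  ultimately show ?thesis using Qfin[of i] by (simp add: less_top order.strict_trans1)
qed

lemma A_emeasure: "emeasure M (A n) = ennreal (measure M (A n))"
  using A_fin by (simp add: emeasure_eq_ennreal_measure less_top)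

lemma A_measure_pos: "measure M (A n) > 0"
  using A_pos A_emeasure by (metis ennreal_less_zero_iff)

lemma A_unique: "x \<in> A n \<Longrightarrow> x \<in> A m \<Longrightarrow> n = m"
  using disj unfolding disjoint_family_on_def by auto

lemma A_exists: "x \<in> space M \<Longrightarrow> \<exists>n. x \<in> A n"
  using cover by auto

lemma atom_dichotomy:
  assumes "B \<in> sets F"
  shows "emeasure M (B \<inter> A n) = 0 \<or> A n - B \<in> null_sets M"
proof -
  have "B \<inter> A n \<in> sets F" using assms A_F by auto
  then have "emeasure M (B \<inter> A n) = 0 \<or> emeasure M (B \<inter> A n) = emeasure M (A n)"
    using atom[of n] unfolding F_atom_def by auto
  moreover
  have BM: "B \<in> sets M" using assms sets_F_M by auto
  {
    assume e: "emeasure M (B \<inter> A n) = emeasure M (A n)"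
    have "emeasure M (A n - (B \<inter> A n)) = emeasure M (A n) - emeasure M (B \<inter> A n)"
    proof (rule emeasure_Diff)
      have "emeasure M (B \<inter> A n) \<le> emeasure M (A n)" by (rule emeasure_mono) (use BM in auto)
      then show "emeasure M (B \<inter> A n) \<noteq> \<infinity>" using A_fin[of n] by (auto simp: top_unique)
    qed (use BM in auto)
    moreover have "A n - (B \<inter> A n) = A n - B" by auto
    ultimately have "emeasure M (A n - B) = emeasure M (A n) - emeasure M (B \<inter> A n)" by simp
    then have "emeasure M (A n - B) = 0" using e A_fin[of n] by (simp add: less_top)
    then have "A n - B \<in> null_sets M" using BM by (auto intro!: null_setsI)
  }
  ultimately show ?thesis by auto
qed

lemma nn_cond_exp_atom:
  assumes [measurable]: "f \<in> borel_measurable M"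
  shows "AE x in M. \<forall>n. x \<in> A n \<longrightarrow> nn_cond_exp M F f x = set_nn_integral M (A n) f / emeasure M (A n)"
proof -
  interpret sigma_finite_subalgebra M F by (rule sfs)
  define c where "c m = set_nn_integral M (A m) f / emeasure M (A m)" for m
  define G where "G x = (\<Sum>m. c m * indicator (A m) x)" for x
  have GF: "G \<in> borel_measurable F" unfolding G_def by measurable
  have GM[measurable]: "G \<in> borel_measurable M" using GF measurable_from_subalg[OF subalg] by blast
  have Gval: "G x = c n" if "x \<in> A n" for x n
  proof -
    have "G x = (\<Sum>m\<in>{n}. c m * indicator (A m) x)" unfolding G_def
      by (rule suminf_finite) (use that A_unique in \<open>auto simp: indicator_def\<close>)
    then show ?thesis using that by simp
  qed
  have piece: "(\<integral>\<^sup>+x. f x * indicator (B \<inter> A m) x \<partial>M) = (\<integral>\<^sup>+x. G x * indicator (B \<inter> A m) x \<partial>M)"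
    if B: "B \<in> sets F" for B m
  proof -
    have BM: "B \<in> sets M" using B sets_F_M by auto
    consider "emeasure M (B \<inter> A m) = 0" | "A m - B \<in> null_sets M" using atom_dichotomy[OF B] by auto
    then show ?thesis
    proof cases
      case 1
      then have N: "B \<inter> A m \<in> null_sets M" using BM by (auto intro!: null_setsI)
      show ?thesis using nn_integral_null_set[OF N] by simp
    next
      case 2
      have ae: "AE x in M. indicator (B \<inter> A m) x = (indicator (A m) x :: ennreal)"
        using AE_not_in[OF 2] by eventually_elim (auto simp: indicator_def)
      have "(\<integral>\<^sup>+x. f x * indicator (B \<inter> A m) x \<partial>M) = (\<integral>\<^sup>+x. f x * indicator (A m) x \<partial>M)"
        by (rule nn_integral_cong_AE) (use ae in auto)
      also have "\<dots> = c m * emeasure M (A m)" unfolding c_def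
        using A_pos[of m] A_fin[of m]
        by (simp add: ennreal_divide_times ennreal_times_divide mult.commute[of "emeasure M (A m)"] ennreal_mult_divide_eq)
      also have "\<dots> = (\<integral>\<^sup>+x. c m * indicator (A m) x \<partial>M)" by (simp add: nn_integral_cmult_indicator)
      also have "\<dots> = (\<integral>\<^sup>+x. G x * indicator (A m) x \<partial>M)"
        by (rule nn_integral_cong) (auto simp: Gval indicator_def)
      also have "\<dots> = (\<integral>\<^sup>+x. G x * indicator (B \<inter> A m) x \<partial>M)"
        by (rule nn_integral_cong_AE) (use ae in auto)
      finally show ?thesis .
    qed
  qed
  have split: "(\<integral>\<^sup>+x. h x * indicator B x \<partial>M) = (\<Sum>m. \<integral>\<^sup>+x. h x * indicator (B \<inter> A m) x \<partial>M)"
    if B: "B \<in> sets F" and [measurable]: "h \<in> borel_measurable M" for B h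
  proof -
    have BM[measurable]: "B \<in> sets M" using B sets_F_M by auto
    have "(\<integral>\<^sup>+x. h x * indicator B x \<partial>M) = (\<integral>\<^sup>+x. (\<Sum>m. h x * indicator (B \<inter> A m) x) \<partial>M)"
    proof (rule nn_integral_cong)
      fix x assume x: "x \<in> space M"
      have "(\<Sum>m. indicator (B \<inter> A m) x :: ennreal) = indicator (\<Union>m. B \<inter> A m) x"
        by (rule suminf_indicator) (use disj in \<open>auto simp: disjoint_family_on_def\<close>)
      also have "(\<Union>m. B \<inter> A m) = B \<inter> space M" using cover by auto
      finally show "h x * indicator B x = (\<Sum>m. h x * indicator (B \<inter> A m) x)"
        using x by (simp add: indicator_def)
    qed
    also have "\<dots> = (\<Sum>m. \<integral>\<^sup>+x. h x * indicator (B \<inter> A m) x \<partial>M)"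
      by (rule nn_integral_suminf) measurable
    finally show ?thesis .
  qed
  have "AE x in M. G x = nn_cond_exp M F f x"
  proof (rule nn_cond_exp_charact)
    fix B assume B: "B \<in> sets F"
    show "(\<integral>\<^sup>+x\<in>B. f x \<partial>M) = (\<integral>\<^sup>+x\<in>B. G x \<partial>M)"
      using split[OF B, of f] split[OF B, of G] piece[OF B] by simp
  qed (use GF in auto)
  moreover have "\<forall>x\<in>space M. \<forall>n. x \<in> A n \<longrightarrow> G x = c n" using Gval by auto
  ultimately show ?thesis unfolding c_def by auto
qed

definition cav :: "('a \<Rightarrow> real) \<Rightarrow> nat \<Rightarrow> real" where
  "cav g n = enn2real (set_nn_integral M (A n) (\<lambda>x. ennreal (g x)) / emeasure M (A n))
     - enn2real (set_nn_integral M (A n) (\<lambda>x. ennreal (- g x)) / emeasure M (A n))"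

lemma rce_atom:
  assumes [measurable]: "g \<in> borel_measurable M"
  shows "AE x in M. \<forall>n. x \<in> A n \<longrightarrow> real_cond_exp M F g x = cav g n"
  using nn_cond_exp_atom[of "\<lambda>x. ennreal (g x)"] nn_cond_exp_atom[of "\<lambda>x. ennreal (- g x)"]
  unfolding real_cond_exp_def cav_def by auto

lemma enn2real_div_mu:
  assumes "\<mu> > 0" shows "enn2real (X / ennreal \<mu>) = enn2real X / \<mu>"
proof (cases X)
  case (real r)
  then show ?thesis using assms by (simp add: divide_ennreal)
next
  case top
  then show ?thesis using assms by (simp add: ennreal_top_divide)
qed

lemma cav_integrable:
  assumes [measurable]: "g \<in> borel_measurable M" and int: "integrable M (\<lambda>x. g x * indicator (A n) x)"
  shows "cav g n = (\<integral>x. g x * indicator (A n) x \<partial>M) / measure M (A n)"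
proof -
  have e1: "set_nn_integral M (A n) (\<lambda>x. ennreal (g x)) = (\<integral>\<^sup>+x. ennreal (g x * indicator (A n) x) \<partial>M)"
    by (rule nn_integral_cong) (auto simp: indicator_def)
  have e2: "set_nn_integral M (A n) (\<lambda>x. ennreal (- g x)) = (\<integral>\<^sup>+x. ennreal (- (g x * indicator (A n) x)) \<partial>M)"
    by (rule nn_integral_cong) (auto simp: indicator_def)
  have "cav g n = enn2real (\<integral>\<^sup>+x. ennreal (g x * indicator (A n) x) \<partial>M) / measure M (A n)
      - enn2real (\<integral>\<^sup>+x. ennreal (- (g x * indicator (A n) x)) \<partial>M) / measure M (A n)"
    unfolding cav_def e1 e2 A_emeasure enn2real_div_mu[OF A_measure_pos] ..
  also have "\<dots> = (enn2real (\<integral>\<^sup>+x. ennreal (g x * indicator (A n) x) \<partial>M)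
      - enn2real (\<integral>\<^sup>+x. ennreal (- (g x * indicator (A n) x)) \<partial>M)) / measure M (A n)"
    by (rule diff_divide_distrib[symmetric])
  also have "\<dots> = (\<integral>x. g x * indicator (A n) x \<partial>M) / measure M (A n)"
    using real_lebesgue_integral_def[OF int] by simp
  finally show ?thesis .
qed

lemma cav_zero:
  assumes [measurable]: "g \<in> borel_measurable M" and z: "AE x in M. x \<in> A n \<longrightarrow> g x = 0"
  shows "cav g n = 0"
proof -
  have ae: "AE x in M. 0 = g x * indicator (A n) x" using z by eventually_elim (auto simp: indicator_def)
  have int: "integrable M (\<lambda>x. g x * indicator (A n) x)"
    by (rule integrable_cong_AE_imp[OF integrable_zero _ ae]) measurable
  have "(\<integral>x. g x * indicator (A n) x \<partial>M) = (\<integral>x. 0 \<partial>M)"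
    by (rule integral_cong_AE) (use ae in \<open>auto elim: eventually_mono\<close>)
  then have "(\<integral>x. g x * indicator (A n) x \<partial>M) = 0" by simp
  then show ?thesis using cav_integrable[OF assms(1) int] by simp
qed

end



lemma sgn_pow:
  fixes v r s :: real
  assumes "(s - 1) * r = s" "s > 1"
  shows "\<bar>sgn v * \<bar>v\<bar> powr (s - 1)\<bar> powr r = \<bar>v\<bar> powr s"
    and "v * (sgn v * \<bar>v\<bar> powr (s - 1)) = \<bar>v\<bar> powr s"
proof -
  show "\<bar>sgn v * \<bar>v\<bar> powr (s - 1)\<bar> powr r = \<bar>v\<bar> powr s"
  proof (cases "v = 0")
    case True then show ?thesis using assms by simp
  next
    case False
    then have "\<bar>sgn v * \<bar>v\<bar> powr (s - 1)\<bar> = \<bar>v\<bar> powr (s - 1)" by (simp add: abs_mult)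
    then show ?thesis using assms by (simp add: powr_powr)
  qed
  show "v * (sgn v * \<bar>v\<bar> powr (s - 1)) = \<bar>v\<bar> powr s"
  proof (cases "v = 0")
    case True then show ?thesis using assms by simp
  next
    case False
    have "v * (sgn v * \<bar>v\<bar> powr (s - 1)) = \<bar>v\<bar> * \<bar>v\<bar> powr (s - 1)"
      by (simp add: abs_sgn mult.assoc[symmetric] mult.commute[of v])
    also have "\<dots> = \<bar>v\<bar> powr (1 + (s - 1))" using False by (simp add: powr_mult_base)
    finally show ?thesis by simp
  qed
qed

lemma nn_fin_int:
  fixes h :: "'a \<Rightarrow> real"
  assumes [measurable]: "h \<in> borel_measurable M" "S \<in> sets M" and nn: "\<And>x. h x \<ge> 0"
    and fin: "set_nn_integral M S (\<lambda>x. ennreal (h x)) < \<infinity>"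
  shows "integrable M (\<lambda>x. h x * indicator S x)"
    and "enn2real (set_nn_integral M S (\<lambda>x. ennreal (h x))) = (\<integral>x. h x * indicator S x \<partial>M)"
proof -
  have e: "set_nn_integral M S (\<lambda>x. ennreal (h x)) = (\<integral>\<^sup>+x. ennreal (h x * indicator S x) \<partial>M)"
    by (rule nn_integral_cong) (auto simp: indicator_def)
  show "integrable M (\<lambda>x. h x * indicator S x)"
    by (rule integrableI_nonneg) (use fin nn in \<open>auto simp: e\<close>)
  show "enn2real (set_nn_integral M S (\<lambda>x. ennreal (h x))) = (\<integral>x. h x * indicator S x \<partial>M)"
    unfolding e by (rule integral_eq_nn_integral[symmetric]) (use nn in auto)
qed

lemma int_fin_nn:
  fixes h :: "'a \<Rightarrow> real"
  assumes [measurable]: "h \<in> borel_measurable M" "S \<in> sets M" and nn: "\<And>x. h x \<ge> 0"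
    and int: "integrable M (\<lambda>x. h x * indicator S x)"
  shows "set_nn_integral M S (\<lambda>x. ennreal (h x)) < \<infinity>"
proof -
  have e: "set_nn_integral M S (\<lambda>x. ennreal (h x)) = (\<integral>\<^sup>+x. ennreal (h x * indicator S x) \<partial>M)"
    by (rule nn_integral_cong) (auto simp: indicator_def)
  show ?thesis unfolding e using nn_integral_eq_integral[OF int] nn by (simp add: indicator_def)
qed

locale wce_setting = atom_setting M F A for M F :: "'a measure" and A +
  fixes p q :: real and w u :: "'a \<Rightarrow> real"
  assumes p_gt: "1 < p" and pq: "1/p + 1/q = 1"
    and wm[measurable]: "w \<in> borel_measurable M" and um[measurable]: "u \<in> borel_measurable M"
    and bdd: "bounded_op_Lp p M (WCE M F w u)"
begin

abbreviation "T \<equiv> WCE M F w u"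

lemma pq_facts: "p > 0" "q > 1" "q > 0" "(q - 1) * p = q" "(p - 1) * q = p" "1/q = 1 - 1/p"
  using conj_exp[OF p_gt pq] p_gt by auto

definition "WI n = set_nn_integral M (A n) (\<lambda>x. ennreal (\<bar>w x\<bar> powr p))"
definition "UI n = set_nn_integral M (A n) (\<lambda>x. ennreal (\<bar>u x\<bar> powr q))"
definition "Wr n = enn2real (WI n)"
definition "Ur n = enn2real (UI n)"
definition "mu n = measure M (A n)"

lemma mu_pos: "mu n > 0" unfolding mu_def using A_measure_pos .

lemma Wr_nonneg: "Wr n \<ge> 0" and Ur_nonneg: "Ur n \<ge> 0"
  unfolding Wr_def Ur_def by auto

lemma WI_int: assumes "WI n < \<infinity>"
  shows "integrable M (\<lambda>x. \<bar>w x\<bar> powr p * indicator (A n) x)"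
    and "Wr n = (\<integral>x. \<bar>w x\<bar> powr p * indicator (A n) x \<partial>M)"
  using nn_fin_int[of "\<lambda>x. \<bar>w x\<bar> powr p" M "A n"] assms unfolding Wr_def WI_def by auto

lemma UI_int: assumes "UI n < \<infinity>"
  shows "integrable M (\<lambda>x. \<bar>u x\<bar> powr q * indicator (A n) x)"
    and "Ur n = (\<integral>x. \<bar>u x\<bar> powr q * indicator (A n) x \<partial>M)"
  using nn_fin_int[of "\<lambda>x. \<bar>u x\<bar> powr q" M "A n"] assms unfolding Ur_def UI_def by auto

lemma cea_w: "cond_exp_atom M (\<lambda>x. \<bar>w x\<bar> powr p) (A n) = Wr n / mu n"
  unfolding cond_exp_atom_def Wr_def WI_def mu_def A_emeasure enn2real_div_mu[OF A_measure_pos] ..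

lemma cea_u: "cond_exp_atom M (\<lambda>x. \<bar>u x\<bar> powr q) (A n) = Ur n / mu n"
  unfolding cond_exp_atom_def Ur_def UI_def mu_def A_emeasure enn2real_div_mu[OF A_measure_pos] ..

lemma a_eq: "cond_exp_atom M (\<lambda>x. \<bar>w x\<bar> powr p) (A n) powr (1 / p)
                 * cond_exp_atom M (\<lambda>x. \<bar>u x\<bar> powr q) (A n) powr (1 / q)
   = Wr n powr (1/p) * Ur n powr (1/q) / mu n"
proof -
  have m: "mu n > 0" by (rule mu_pos)
  have "(Wr n / mu n) powr (1/p) * (Ur n / mu n) powr (1/q)
      = (Wr n powr (1/p) * Ur n powr (1/q)) / (mu n powr (1/p) * mu n powr (1/q))"
    using m Wr_nonneg[of n] Ur_nonneg[of n] by (simp add: powr_divide)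
  also have "mu n powr (1/p) * mu n powr (1/q) = mu n"
    using m pq by (simp add: powr_add[symmetric])
  finally show ?thesis unfolding cea_w cea_u .
qed

lemma memLp_meas: "memLp p M f \<Longrightarrow> f \<in> borel_measurable M"
  unfolding memLp_def by auto

lemma T_atom:
  assumes "memLp p M f"
  shows "AE x in M. \<forall>n. x \<in> A n \<longrightarrow> T f x = w x * cav (\<lambda>y. u y * f y) n"
proof -
  have [measurable]: "f \<in> borel_measurable M" using memLp_meas[OF assms] .
  show ?thesis using rce_atom[of "\<lambda>y. u y * f y"] unfolding WCE_def by auto
qed

lemma ext_u:
  fixes c :: real and S :: "'a set"
  assumes S[measurable]: "S \<in> sets M" and Ssub: "S \<subseteq> A n"
    and int: "integrable M (\<lambda>x. \<bar>u x\<bar> powr q * indicator S x)"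
  defines "f \<equiv> \<lambda>x. c * (sgn (u x) * \<bar>u x\<bar> powr (q - 1)) * indicator S x"
  shows "memLp p M f"
    and "(\<integral>x. \<bar>f x\<bar> powr p \<partial>M) = \<bar>c\<bar> powr p * (\<integral>x. \<bar>u x\<bar> powr q * indicator S x \<partial>M)"
    and "AE x in M. x \<in> A n \<longrightarrow> T f x = w x * (c * (\<integral>x. \<bar>u x\<bar> powr q * indicator S x \<partial>M) / mu n)"
proof -
  have pf: "p > 0" "q > 1" "(q - 1) * p = q" using pq_facts by auto
  have fm[measurable]: "f \<in> borel_measurable M" unfolding f_def by measurable
  have pw1: "\<bar>f x\<bar> powr p = \<bar>c\<bar> powr p * (\<bar>u x\<bar> powr q * indicator S x)" for x
    unfolding f_def using pf sgn_pow(1)[OF pf(3) pf(2), of "u x"]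
    by (cases "x \<in> S") (simp_all add: abs_powr_mult)
  have pw2: "u x * f x = c * (\<bar>u x\<bar> powr q * indicator S x)" for x
    unfolding f_def using pf sgn_pow(2)[OF pf(3) pf(2), of "u x"]
    by (cases "x \<in> S") (simp_all add: algebra_simps)
  show mf: "memLp p M f" unfolding memLp_def pw1 using int by auto
  show "(\<integral>x. \<bar>f x\<bar> powr p \<partial>M) = \<bar>c\<bar> powr p * (\<integral>x. \<bar>u x\<bar> powr q * indicator S x \<partial>M)"
    unfolding pw1 by simp
  have e3: "u x * f x * indicator (A n) x = c * (\<bar>u x\<bar> powr q * indicator S x)" for x
    unfolding pw2 using Ssub by (auto simp: indicator_def)
  have "cav (\<lambda>y. u y * f y) n = (\<integral>x. u x * f x * indicator (A n) x \<partial>M) / measure M (A n)"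
    by (rule cav_integrable) (use int in \<open>auto simp: e3\<close>)
  also have "\<dots> = c * (\<integral>x. \<bar>u x\<bar> powr q * indicator S x \<partial>M) / mu n"
    unfolding e3 mu_def by simp
  finally have cv: "cav (\<lambda>y. u y * f y) n = c * (\<integral>x. \<bar>u x\<bar> powr q * indicator S x \<partial>M) / mu n" .
  show "AE x in M. x \<in> A n \<longrightarrow> T f x = w x * (c * (\<integral>x. \<bar>u x\<bar> powr q * indicator S x \<partial>M) / mu n)"
    using T_atom[OF mf] by eventually_elim (use cv in auto)
qed

lemma A_int: "integrable M (\<lambda>x. c * indicator (A n) x :: real)"
proof -
  have "integrable M (indicator (A n) :: _ \<Rightarrow> real)"
    using A_fin[of n] sets.sets_into_space[OF A_M[of n]] by (simp add: integrable_indicator_iff Int_absorb2)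
  then show ?thesis by simp
qed

lemma bad_atom:
  assumes nb: "\<not> (WI n < \<infinity> \<and> UI n < \<infinity>)"
  shows "(AE x in M. x \<in> A n \<longrightarrow> u x = 0) \<or> (AE x in M. x \<in> A n \<longrightarrow> w x = 0)"
proof (rule ccontr)
  assume "\<not> ?thesis"
  then have nu: "\<not> (AE x in M. x \<in> A n \<longrightarrow> u x = 0)" and nw: "\<not> (AE x in M. x \<in> A n \<longrightarrow> w x = 0)"
    by auto
  have pf: "p > 0" "q > 1" "q > 0" "1/q = 1 - 1/p" using pq_facts by auto
  obtain C where C: "\<And>f. memLp p M f \<Longrightarrow> Lp_norm p M (T f) \<le> C * Lp_norm p M f"
    using bdd unfolding bounded_op_Lp_def by blast
  have memT: "\<And>f. memLp p M f \<Longrightarrow> memLp p M (T f)" using bdd unfolding bounded_op_Lp_def by blast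
  have Asp: "A n \<subseteq> space M" using sets.sets_into_space[OF A_M[of n]] .
  define S where "S k = A n \<inter> {x \<in> space M. \<bar>u x\<bar> \<le> real k}" for k :: nat
  have S_M[measurable]: "S k \<in> sets M" for k unfolding S_def by measurable
  have S_sub: "S k \<subseteq> A n" for k unfolding S_def by auto
  have S_mono: "k \<le> k' \<Longrightarrow> S k \<subseteq> S k'" for k k' unfolding S_def by auto
  have S_in: "x \<in> A n \<Longrightarrow> x \<in> S (nat \<lceil>\<bar>u x\<bar>\<rceil>)" for x
    unfolding S_def using Asp by (auto simp: real_nat_ceiling_ge)
  define I where "I k = (\<integral>x. \<bar>u x\<bar> powr q * indicator (S k) x \<partial>M)" for k
  have intS: "integrable M (\<lambda>x. \<bar>u x\<bar> powr q * indicator (S k) x)" for k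
  proof (rule Bochner_Integration.integrable_bound[OF A_int[of "real k powr q" n]])
    show "AE x in M. norm (\<bar>u x\<bar> powr q * indicator (S k) x) \<le> norm (real k powr q * indicator (A n) x)"
    proof (rule AE_I2)
      fix x
      show "norm (\<bar>u x\<bar> powr q * indicator (S k) x) \<le> norm (real k powr q * indicator (A n) x)"
      proof (cases "x \<in> S k")
        case True
        then have "\<bar>u x\<bar> powr q \<le> real k powr q" unfolding S_def by (intro powr_mono2) (use pf in auto)
        moreover have "x \<in> A n" using True S_sub by blast
        ultimately show ?thesis using True by simp
      qed simp
    qed
  qed simp
  have I_nonneg: "I k \<ge> 0" for k unfolding I_def by simp
  have I_mono: "k \<le> k' \<Longrightarrow> I k \<le> I k'" for k k'
    unfolding I_def by (rule integral_mono[OF intS intS]) (use S_mono in \<open>auto simp: indicator_def\<close>)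
  have "\<exists>k. I k > 0"
  proof (rule ccontr)
    assume "\<not> ?thesis"
    then have "I k = 0" for k using I_nonneg[of k] by (meson not_less order.antisym)
    then have "AE x in M. \<bar>u x\<bar> powr q * indicator (S k) x = 0" for k
      using integral_nonneg_eq_0_iff_AE[OF intS[of k]] unfolding I_def by auto
    then have "AE x in M. \<forall>k. \<bar>u x\<bar> powr q * indicator (S k) x = 0"
      by (subst AE_all_countable) blast
    then have "AE x in M. x \<in> A n \<longrightarrow> u x = 0"
    proof eventually_elim
      case (elim x)
      show ?case
      proof
        assume x: "x \<in> A n"
        have "\<bar>u x\<bar> powr q = 0" using elim[rule_format, of "nat \<lceil>\<bar>u x\<bar>\<rceil>"] S_in[OF x] by simp
        then show "u x = 0" by simp
      qed
    qed
    with nu show False by simp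
  qed
  then obtain k0 where k0: "I k0 > 0" by auto
  define f where "f k = (\<lambda>x. 1 * (sgn (u x) * \<bar>u x\<bar> powr (q - 1)) * indicator (S k) x)" for k
  have f_mem: "memLp p M (f k)" for k unfolding f_def by (rule ext_u(1)[OF S_M S_sub intS])
  have f_norm: "(\<integral>x. \<bar>f k x\<bar> powr p \<partial>M) = I k" for k
    unfolding f_def I_def using ext_u(2)[OF S_M S_sub intS, of 1 k] by simp
  have f_T: "AE x in M. x \<in> A n \<longrightarrow> T (f k) x = w x * (I k / mu n)" for k
    unfolding f_def I_def using ext_u(3)[OF S_M S_sub intS, of 1 k] by simp
  have Tk_pw: "AE x in M. \<bar>T (f k) x\<bar> powr p * indicator (A n) x = (I k / mu n) powr p * (\<bar>w x\<bar> powr p * indicator (A n) x)" for k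
    using f_T[of k] proof eventually_elim
    case (elim x)
    show ?case
    proof (cases "x \<in> A n")
      case True
      then have "T (f k) x = (I k / mu n) * w x" using elim by simp
      then have "\<bar>T (f k) x\<bar> powr p = \<bar>I k / mu n\<bar> powr p * \<bar>w x\<bar> powr p"
        by (simp only: abs_powr_mult)
      moreover have "\<bar>I k / mu n\<bar> = I k / mu n" using I_nonneg[of k] mu_pos[of n] by simp
      ultimately show ?thesis using True by simp
    qed simp
  qed
  have Tk_int: "integrable M (\<lambda>x. \<bar>T (f k) x\<bar> powr p * indicator (A n) x)" for k
    using memT[OF f_mem[of k]] unfolding memLp_def by (intro integrable_real_mult_indicator) auto
  have Tk_meas[measurable]: "T (f k) \<in> borel_measurable M" for k using memT[OF f_mem[of k]] unfolding memLp_def by auto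
  have ck0: "(I k0 / mu n) powr p > 0" using k0 mu_pos[of n] by simp
  have "integrable M (\<lambda>x. (I k0 / mu n) powr p * (\<bar>w x\<bar> powr p * indicator (A n) x))"
    by (rule integrable_cong_AE_imp[OF Tk_int[of k0] _ Tk_pw[of k0]]) measurable
  then have wint: "integrable M (\<lambda>x. \<bar>w x\<bar> powr p * indicator (A n) x)" using ck0 by simp
  have Wfin: "WI n < \<infinity>" unfolding WI_def by (rule int_fin_nn[OF _ _ _ wint]) auto
  have Wr_eq: "Wr n = (\<integral>x. \<bar>w x\<bar> powr p * indicator (A n) x \<partial>M)" using WI_int(2)[OF Wfin] .
  have Wpos: "Wr n > 0"
  proof (rule ccontr)
    assume "\<not> Wr n > 0"
    then have "Wr n = 0" using Wr_nonneg[of n] by auto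
    then have "AE x in M. \<bar>w x\<bar> powr p * indicator (A n) x = 0"
      using integral_nonneg_eq_0_iff_AE[OF wint] Wr_eq by auto
    then have "AE x in M. x \<in> A n \<longrightarrow> w x = 0" by eventually_elim auto
    with nw show False by simp
  qed
  define D0 where "D0 = C * mu n / Wr n powr (1/p)"
  have Ibound: "I k \<le> D0 powr q" if kk: "k0 \<le> k" for k
  proof -
    have Ik: "I k > 0" using k0 I_mono[OF kk] by simp
    have "(\<integral>x. \<bar>T (f k) x\<bar> powr p * indicator (A n) x \<partial>M) \<le> (\<integral>x. \<bar>T (f k) x\<bar> powr p \<partial>M)"
      by (rule integral_mono[OF Tk_int]) (use memT[OF f_mem[of k]] in \<open>auto simp: memLp_def indicator_def\<close>)
    moreover have "(\<integral>x. \<bar>T (f k) x\<bar> powr p * indicator (A n) x \<partial>M) = (I k / mu n) powr p * Wr n"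
      using integral_cong_AE[OF _ _ Tk_pw[of k]] Wr_eq by simp
    ultimately have "((I k / mu n) powr p * Wr n) powr (1/p) \<le> Lp_norm p M (T (f k))"
      unfolding Lp_norm_def by (intro powr_mono2) (use pf Wpos Ik mu_pos[of n] in auto)
    moreover have "((I k / mu n) powr p * Wr n) powr (1/p) = (I k / mu n) * Wr n powr (1/p)"
      using pf Wpos Ik mu_pos[of n] by (simp add: powr_mult powr_powr)
    moreover have "Lp_norm p M (f k) = I k powr (1/p)" unfolding Lp_norm_def f_norm ..
    ultimately have "(I k / mu n) * Wr n powr (1/p) \<le> C * I k powr (1/p)" using C[OF f_mem[of k]] by simp
    then have h2: "I k * Wr n powr (1/p) \<le> I k powr (1/p) * (C * mu n)"
      using mu_pos[of n] by (simp add: field_simps)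
    have spl: "I k powr (1/p) * I k powr (1/q) = I k"
      using Ik pq by (simp add: powr_add[symmetric])
    have "I k powr (1/p) * (I k powr (1/q) * Wr n powr (1/p)) = I k * Wr n powr (1/p)"
      by (metis spl mult.assoc)
    then have "I k powr (1/p) * (I k powr (1/q) * Wr n powr (1/p)) \<le> I k powr (1/p) * (C * mu n)"
      using h2 by (rule ord_eq_le_trans)
    then have "I k powr (1/q) * Wr n powr (1/p) \<le> C * mu n"
      using Ik by (simp add: mult_le_cancel_left_pos)
    then have "I k powr (1/q) \<le> D0" unfolding D0_def using Wpos by (simp add: field_simps)
    then have "(I k powr (1/q)) powr q \<le> D0 powr q" by (intro powr_mono2) (use pf in auto)
    moreover have "(I k powr (1/q)) powr q = I k" using Ik pf(3) by (simp add: powr_powr)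
    ultimately show ?thesis by simp
  qed
  have Iall: "I k \<le> D0 powr q" for k
  proof (cases "k0 \<le> k")
    case True then show ?thesis using Ibound by simp
  next
    case False then show ?thesis using I_mono[of k k0] Ibound[of k0] by simp
  qed
  define g where "g k x = ennreal (\<bar>u x\<bar> powr q * indicator (S k) x)" for k x
  have g_inc: "incseq g"
    unfolding incseq_def le_fun_def g_def using S_mono by (auto simp: indicator_def)
  have g_meas: "g k \<in> borel_measurable M" for k unfolding g_def by measurable
  have g_sup: "(SUP k. g k x) = ennreal (\<bar>u x\<bar> powr q) * indicator (A n) x" for x
  proof (cases "x \<in> A n")
    case True
    show ?thesis
    proof (rule antisym)
      show "(SUP k. g k x) \<le> ennreal (\<bar>u x\<bar> powr q) * indicator (A n) x"
        by (rule SUP_least) (use True in \<open>auto simp: g_def indicator_def\<close>)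
      have "g (nat \<lceil>\<bar>u x\<bar>\<rceil>) x = ennreal (\<bar>u x\<bar> powr q) * indicator (A n) x"
        using S_in[OF True] True unfolding g_def by simp
      then show "ennreal (\<bar>u x\<bar> powr q) * indicator (A n) x \<le> (SUP k. g k x)"
        by (metis SUP_upper UNIV_I)
    qed
  next
    case False
    then have "g k x = 0" for k using S_sub unfolding g_def by (auto simp: indicator_def)
    then show ?thesis using False by simp
  qed
  have "UI n = (\<integral>\<^sup>+x. (SUP k. g k x) \<partial>M)" unfolding UI_def g_sup ..
  also have "\<dots> = (SUP k. integral\<^sup>N M (g k))" by (rule nn_integral_monotone_convergence_SUP[OF g_inc g_meas])
  also have "\<dots> \<le> ennreal (D0 powr q)"
  proof (rule SUP_least)
    fix k
    have "integral\<^sup>N M (g k) = ennreal (I k)" unfolding g_def I_def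
      by (rule nn_integral_eq_integral[OF intS]) simp
    then show "integral\<^sup>N M (g k) \<le> ennreal (D0 powr q)" using Iall[of k] by simp
  qed
  finally have "UI n < \<infinity>" using le_less_trans by fastforce
  then show False using nb Wfin by simp
qed

end



lemma sum_single:
  fixes z :: "nat \<Rightarrow> 'b::comm_monoid_add"
  assumes "\<And>k. k \<noteq> m \<Longrightarrow> z k = 0"
  shows "(\<Sum>k<N. z k) = (if m < N then z m else 0)"
proof (cases "m < N")
  case True
  have "(\<Sum>k<N. z k) = (\<Sum>k\<in>{m}. z k)"
    by (rule sum.mono_neutral_right) (use True assms in auto)
  then show ?thesis using True by simp
next
  case False
  have "(\<Sum>k<N. z k) = (\<Sum>k<N. 0)" by (rule sum.cong) (use False assms in auto)
  then show ?thesis using False by simp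
qed

lemma phi_sum:
  fixes N :: nat
  assumes phi: "Lp_functional p M \<phi>" and pf: "p > 0" and z: "\<And>n. memLp p M (z n)"
  shows "memLp p M (\<lambda>x. \<Sum>n<N. c n * z n x)" and "\<phi> (\<lambda>x. \<Sum>n<N. c n * z n x) = (\<Sum>n<N. c n * \<phi> (z n))"
proof -
  show mem: "memLp p M (\<lambda>x. \<Sum>n<N. c n * z n x)" for N by (rule memLp_sum[OF pf z])
  have add: "\<phi> (\<lambda>y. f y + g y) = \<phi> f + \<phi> g" if "memLp p M f" "memLp p M g" for f g
    using phi that unfolding Lp_functional_def by blast
  have cm: "\<phi> (\<lambda>y. c * f y) = c * \<phi> f" if "memLp p M f" for c f
    using phi that unfolding Lp_functional_def by blast
  have z0: "\<phi> (\<lambda>x. 0) = 0"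
    using dual_norm_props(2)[OF phi pf memLp_zero[of p M, OF pf]] Lp_norm_zero[of p M, OF pf] by simp
  show "\<phi> (\<lambda>x. \<Sum>n<N. c n * z n x) = (\<Sum>n<N. c n * \<phi> (z n))"
  proof (induction N)
    case 0
    then show ?case using z0 by simp
  next
    case (Suc N)
    have "\<phi> (\<lambda>x. \<Sum>n<Suc N. c n * z n x) = \<phi> (\<lambda>x. (\<Sum>n<N. c n * z n x) + c N * z N x)" by simp
    also have "\<dots> = \<phi> (\<lambda>x. \<Sum>n<N. c n * z n x) + \<phi> (\<lambda>x. c N * z N x)"
      by (rule add[OF mem memLp_cmult[OF z]])
    also have "\<dots> = (\<Sum>n<Suc N. c n * \<phi> (z n))" using Suc cm[OF z] by simp
    finally show ?case .
  qed
qed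

context wce_setting
begin

definition "good n \<longleftrightarrow> WI n < \<infinity> \<and> UI n < \<infinity>"

lemma good_holder:
  assumes g: "good n" and f: "memLp p M f"
  shows "integrable M (\<lambda>x. u x * f x * indicator (A n) x)"
    and "\<bar>\<integral>x. u x * f x * indicator (A n) x \<partial>M\<bar> \<le> Lp_norm p M f * Ur n powr (1/q)"
proof -
  have [measurable]: "f \<in> borel_measurable M" using memLp_meas[OF f] .
  have uf: "UI n < \<infinity>" using g unfolding good_def by auto
  have e: "\<bar>u x * indicator (A n) x\<bar> powr q = \<bar>u x\<bar> powr q * indicator (A n) x" for x
    using pq_facts by (auto simp: indicator_def)
  have iu: "integrable M (\<lambda>x. \<bar>u x * indicator (A n) x\<bar> powr q)" unfolding e using UI_int(1)[OF uf] .
  have if_: "integrable M (\<lambda>x. \<bar>f x\<bar> powr p)" using f unfolding memLp_def by auto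
  note H = holder[OF p_gt pq _ _ if_ iu]
  have e2: "f x * (u x * indicator (A n) x) = u x * f x * indicator (A n) x" for x by simp
  show int: "integrable M (\<lambda>x. u x * f x * indicator (A n) x)" using H(1) unfolding e2 by simp
  have "\<bar>\<integral>x. u x * f x * indicator (A n) x \<partial>M\<bar> \<le> (\<integral>x. \<bar>u x * f x * indicator (A n) x\<bar> \<partial>M)"
    by (rule integral_abs_bound)
  also have "\<dots> \<le> Lp_norm p M f * Ur n powr (1/q)"
    using H(2) unfolding e2 e Lp_norm_def UI_int(2)[OF uf] by simp
  finally show "\<bar>\<integral>x. u x * f x * indicator (A n) x \<partial>M\<bar> \<le> Lp_norm p M f * Ur n powr (1/q)" .
qed

lemma T_on_atom:
  assumes f: "memLp p M f"
  shows "AE x in M. \<forall>n. x \<in> A n \<longrightarrow>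
     T f x = (if good n then w x * ((\<integral>x. u x * f x * indicator (A n) x \<partial>M) / mu n) else 0)"
proof -
  have [measurable]: "f \<in> borel_measurable M" using memLp_meas[OF f] .
  have "AE x in M. x \<in> A n \<longrightarrow>
     T f x = (if good n then w x * ((\<integral>x. u x * f x * indicator (A n) x \<partial>M) / mu n) else 0)" for n
  proof (cases "good n")
    case True
    have cv: "cav (\<lambda>y. u y * f y) n = (\<integral>x. u x * f x * indicator (A n) x \<partial>M) / mu n"
      unfolding mu_def by (rule cav_integrable) (use good_holder(1)[OF True f] in auto)
    from T_atom[OF f] show ?thesis by eventually_elim (use cv True in auto)
  next
    case False
    then consider "AE x in M. x \<in> A n \<longrightarrow> u x = 0" | "AE x in M. x \<in> A n \<longrightarrow> w x = 0"
      using bad_atom[of n] unfolding good_def by auto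
    then show ?thesis
    proof cases
      case 1
      have "AE x in M. x \<in> A n \<longrightarrow> u x * f x = 0" using 1 by eventually_elim auto
      then have cv: "cav (\<lambda>y. u y * f y) n = 0" by (intro cav_zero) auto
      from T_atom[OF f] show ?thesis by eventually_elim (use cv False in auto)
    next
      case 2
      with T_atom[OF f] show ?thesis by eventually_elim (use False in auto)
    qed
  qed
  then show ?thesis by (subst AE_all_countable) blast
qed

definition "phi k f = (if good k then (\<integral>x. u x * f x * indicator (A k) x \<partial>M) / mu k else 0)"
definition "yv k = (\<lambda>x. if good k then w x * indicator (A k) x else 0)"
definition "aa n = Wr n powr (1/p) * Ur n powr (1/q) / mu n"

lemma aa_nonneg: "aa n \<ge> 0" unfolding aa_def using mu_pos[of n] by simp

lemma phi_props:
  shows "Lp_functional p M (phi k)"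
    and "dual_norm p M (phi k) \<le> (if good k then Ur k powr (1/q) / mu k else 0)"
proof -
  have pf: "p > 0" using pq_facts by auto
  define B where "B = (if good k then Ur k powr (1/q) / mu k else 0)"
  have B0: "B \<ge> 0" unfolding B_def using mu_pos[of k] by simp
  have bound: "\<bar>phi k f\<bar> \<le> B * Lp_norm p M f" if f: "memLp p M f" for f
  proof (cases "good k")
    case True
    have "\<bar>phi k f\<bar> = \<bar>\<integral>x. u x * f x * indicator (A k) x \<partial>M\<bar> / mu k"
      unfolding phi_def using True mu_pos[of k] by simp
    also have "\<dots> \<le> Lp_norm p M f * Ur k powr (1/q) / mu k"
      by (rule divide_right_mono[OF good_holder(2)[OF True f]]) (use mu_pos[of k] in simp)
    finally show ?thesis unfolding B_def using True by (simp add: mult.commute)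
  next
    case False then show ?thesis unfolding phi_def B_def by simp
  qed
  have add: "phi k (\<lambda>y. f y + g y) = phi k f + phi k g" if f: "memLp p M f" and g: "memLp p M g" for f g
  proof (cases "good k")
    case True
    have e: "u x * (f x + g x) * indicator (A k) x = u x * f x * indicator (A k) x + u x * g x * indicator (A k) x" for x
      by (simp add: algebra_simps)
    have "(\<integral>x. u x * (f x + g x) * indicator (A k) x \<partial>M)
       = (\<integral>x. u x * f x * indicator (A k) x \<partial>M) + (\<integral>x. u x * g x * indicator (A k) x \<partial>M)"
      unfolding e by (rule Bochner_Integration.integral_add[OF good_holder(1)[OF True f] good_holder(1)[OF True g]])
    then show ?thesis unfolding phi_def using True by (simp add: add_divide_distrib)
  next
    case False then show ?thesis unfolding phi_def by simp
  qed
  have cm: "phi k (\<lambda>y. c * f y) = c * phi k f" for c f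
  proof -
    have e: "u x * (c * f x) * indicator (A k) x = c * (u x * f x * indicator (A k) x)" for x by simp
    show ?thesis unfolding phi_def e by simp
  qed
  show "Lp_functional p M (phi k)" unfolding Lp_functional_def using add cm bound by blast
  show "dual_norm p M (phi k) \<le> (if good k then Ur k powr (1/q) / mu k else 0)"
    using dual_norm_le[OF pf B0 bound] unfolding B_def by simp
qed

lemma yv_props:
  shows "memLp p M (yv k)" and "Lp_norm p M (yv k) = (if good k then Wr k powr (1/p) else 0)"
proof -
  have pf: "p > 0" using pq_facts by auto
  show "memLp p M (yv k)"
  proof (cases "good k")
    case True
    have e: "\<bar>w x * indicator (A k) x\<bar> powr p = \<bar>w x\<bar> powr p * indicator (A k) x" for x
      using pf by (auto simp: indicator_def)
    show ?thesis unfolding memLp_def yv_def using True WI_int(1)[of k] unfolding good_def by (auto simp: e)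
  next
    case False then show ?thesis unfolding yv_def using memLp_zero[of p M, OF pf] by simp
  qed
  show "Lp_norm p M (yv k) = (if good k then Wr k powr (1/p) else 0)"
  proof (cases "good k")
    case True
    have e: "\<bar>w x * indicator (A k) x\<bar> powr p = \<bar>w x\<bar> powr p * indicator (A k) x" for x
      using pf by (auto simp: indicator_def)
    show ?thesis unfolding Lp_norm_def yv_def using True WI_int(2)[of k] unfolding good_def by (auto simp: e)
  next
    case False then show ?thesis unfolding yv_def using Lp_norm_zero[of p M, OF pf] by simp
  qed
qed

lemma series_bound: "dual_norm p M (phi k) * Lp_norm p M (yv k) \<le> aa k"
proof (cases "good k")
  case True
  have d: "dual_norm p M (phi k) \<le> Ur k powr (1/q) / mu k" using phi_props(2)[of k] True by simp
  have l: "Lp_norm p M (yv k) = Wr k powr (1/p)" using yv_props(2)[of k] True by simp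
  have "dual_norm p M (phi k) * Lp_norm p M (yv k) \<le> (Ur k powr (1/q) / mu k) * Wr k powr (1/p)"
    unfolding l by (rule mult_right_mono[OF d]) simp
  also have "\<dots> = aa k" unfolding aa_def by simp
  finally show ?thesis .
next
  case False
  then show ?thesis using yv_props(2)[of k] aa_nonneg[of k] by simp
qed

lemma conv:
  assumes f: "memLp p M f"
  shows "(\<lambda>N. Lp_norm p M (\<lambda>x. T f x - (\<Sum>k<N. phi k f * yv k x))) \<longlonglongrightarrow> 0"
proof -
  have pf: "p > 0" using pq_facts by auto
  have memT: "memLp p M (T f)" using bdd f unfolding bounded_op_Lp_def by blast
  have Tm[measurable]: "T f \<in> borel_measurable M" and Ti: "integrable M (\<lambda>x. \<bar>T f x\<bar> powr p)"
    using memT unfolding memLp_def by auto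
  define B where "B N = space M - (\<Union>m\<in>{..<N}. A m)" for N :: nat
  have B_M[measurable]: "B N \<in> sets M" for N
    unfolding B_def by (intro sets.Diff sets.top sets.finite_UN) auto
  have yvm[measurable]: "yv k \<in> borel_measurable M" for k using yv_props(1)[of k] unfolding memLp_def by auto
  have pw: "T f x - (\<Sum>k<N. phi k f * yv k x) = T f x * indicator (B N) x"
    if xs: "x \<in> space M" and ev: "\<forall>n. x \<in> A n \<longrightarrow>
     T f x = (if good n then w x * ((\<integral>x. u x * f x * indicator (A n) x \<partial>M) / mu n) else 0)" for x N
  proof -
    obtain m where xm: "x \<in> A m" using A_exists[OF xs] by auto
    have yz: "phi k f * yv k x = 0" if "k \<noteq> m" for k
    proof -
      have "x \<notin> A k" using A_unique[OF xm] that by auto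
      then show ?thesis unfolding yv_def by simp
    qed
    have sm: "(\<Sum>k<N. phi k f * yv k x) = (if m < N then phi m f * yv m x else 0)"
      by (rule sum_single) (rule yz)
    have ev1: "T f x = (if good m then w x * ((\<integral>x. u x * f x * indicator (A m) x \<partial>M) / mu m) else 0)"
      using ev xm by blast
    have Tx: "T f x = phi m f * yv m x"
    proof (cases "good m")
      case True
      then show ?thesis unfolding ev1 phi_def yv_def using xm by simp
    next
      case False
      then show ?thesis unfolding ev1 phi_def yv_def by simp
    qed
    show ?thesis
    proof (cases "m < N")
      case True
      then have "x \<notin> B N" unfolding B_def using xm by auto
      then show ?thesis unfolding sm Tx using True by simp
    next
      case False
      have "x \<notin> A m'" if "m' < N" for m' using A_unique[OF xm] that False by auto
      then have "x \<in> B N" unfolding B_def using xs by auto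
      then show ?thesis unfolding sm using False by simp
    qed
  qed
  have ae: "AE x in M. T f x - (\<Sum>k<N. phi k f * yv k x) = T f x * indicator (B N) x" for N
    using AE_space T_on_atom[OF f] by eventually_elim (rule pw)
  have eqn: "Lp_norm p M (\<lambda>x. T f x - (\<Sum>k<N. phi k f * yv k x))
      = (\<integral>x. \<bar>T f x * indicator (B N) x\<bar> powr p \<partial>M) powr (1/p)" for N
  proof -
    have "(\<integral>x. \<bar>T f x - (\<Sum>k<N. phi k f * yv k x)\<bar> powr p \<partial>M) = (\<integral>x. \<bar>T f x * indicator (B N) x\<bar> powr p \<partial>M)"
      by (rule integral_cong_AE) (use ae[of N] in \<open>auto elim: eventually_mono\<close>)
    then show ?thesis unfolding Lp_norm_def by simp
  qed
  have lim: "(\<lambda>N. \<integral>x. \<bar>T f x * indicator (B N) x\<bar> powr p \<partial>M) \<longlonglongrightarrow> (\<integral>x. 0 \<partial>M)"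
  proof (rule integral_dominated_convergence[where w="\<lambda>x. \<bar>T f x\<bar> powr p"])
    show "AE x in M. (\<lambda>N. \<bar>T f x * indicator (B N) x\<bar> powr p) \<longlonglongrightarrow> 0"
    proof (rule AE_I2)
      fix x assume xs: "x \<in> space M"
      obtain m where xm: "x \<in> A m" using A_exists[OF xs] by auto
      have "\<forall>N\<ge>Suc m. \<bar>T f x * indicator (B N) x\<bar> powr p = 0"
      proof (intro allI impI)
        fix N assume "Suc m \<le> N"
        then have "x \<notin> B N" unfolding B_def using xm by auto
        then show "\<bar>T f x * indicator (B N) x\<bar> powr p = 0" by simp
      qed
      then show "(\<lambda>N. \<bar>T f x * indicator (B N) x\<bar> powr p) \<longlonglongrightarrow> 0"
        by (intro tendsto_eventually) (auto simp: eventually_sequentially)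
    qed
    show "AE x in M. norm (\<bar>T f x * indicator (B N) x\<bar> powr p) \<le> \<bar>T f x\<bar> powr p" for N
      by (rule AE_I2) (auto simp: indicator_def)
  qed (use Ti in auto)
  then have lim0: "(\<lambda>N. \<integral>x. \<bar>T f x * indicator (B N) x\<bar> powr p \<partial>M) \<longlonglongrightarrow> 0" by simp
  have "(\<lambda>N. (\<integral>x. \<bar>T f x * indicator (B N) x\<bar> powr p \<partial>M) powr (1/p)) \<longlonglongrightarrow> 0"
    by (rule tendsto_zero_powrI[OF lim0 tendsto_const]) (use pf in auto)
  then show ?thesis unfolding eqn .
qed

lemma sufficiency:
  assumes "summable aa"
  shows "nuclear_Lp p M T"
  unfolding nuclear_Lp_def
proof (intro conjI exI[of _ phi] exI[of _ yv])
  have pf: "p > 0" using pq_facts by auto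
  show "bounded_op_Lp p M T" by (rule bdd)
  show "\<forall>n. Lp_functional p M (phi n)" using phi_props(1) by blast
  show "\<forall>n. memLp p M (yv n)" using yv_props(1) by blast
  show "summable (\<lambda>n. dual_norm p M (phi n) * Lp_norm p M (yv n))"
  proof (rule summable_comparison_test[OF _ assms])
    show "\<exists>N. \<forall>n\<ge>N. norm (dual_norm p M (phi n) * Lp_norm p M (yv n)) \<le> aa n"
    proof (intro exI allI impI)
      fix n
      have "dual_norm p M (phi n) \<ge> 0" using dual_norm_props(1)[OF phi_props(1) pf] .
      then show "norm (dual_norm p M (phi n) * Lp_norm p M (yv n)) \<le> aa n"
        using series_bound[of n] Lp_norm_nonneg[of p M "yv n"] by simp
    qed
  qed
  show "\<forall>f. memLp p M f \<longrightarrow> (\<lambda>N. Lp_norm p M (\<lambda>x. T f x - (\<Sum>k<N. phi k f * yv k x))) \<longlonglongrightarrow> 0"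
    using conv by blast
qed

lemma aa_pos_good:
  assumes "aa n > 0"
  shows "good n" "Wr n > 0" "Ur n > 0"
proof -
  have "Wr n \<noteq> 0" "Ur n \<noteq> 0" using assms unfolding aa_def by auto
  then show W: "Wr n > 0" and U: "Ur n > 0" using Wr_nonneg[of n] Ur_nonneg[of n] by auto
  have "WI n \<noteq> \<infinity>" using W unfolding Wr_def by auto
  moreover have "UI n \<noteq> \<infinity>" using U unfolding Ur_def by auto
  ultimately show "good n" unfolding good_def by (simp add: less_top)
qed

definition "gg n = (if aa n > 0 then (\<lambda>x. (1 / Ur n powr (1/p)) * (sgn (u x) * \<bar>u x\<bar> powr (q - 1)) * indicator (A n) x)
                     else (\<lambda>x. 0))"
definition "hh n = (if aa n > 0 then (\<lambda>x. (1 / Wr n powr (1/q)) * (sgn (w x) * \<bar>w x\<bar> powr (p - 1)) * indicator (A n) x)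
                     else (\<lambda>x. 0))"

lemma gg_supp: "x \<notin> A n \<Longrightarrow> gg n x = 0" unfolding gg_def by simp
lemma hh_supp: "x \<notin> A n \<Longrightarrow> hh n x = 0" unfolding hh_def by simp

lemma gg_props:
  shows "memLp p M (gg n)" and "(\<integral>x. \<bar>gg n x\<bar> powr p \<partial>M) \<le> 1"
proof -
  have pf: "p > 0" using pq_facts by auto
  have "memLp p M (gg n) \<and> (\<integral>x. \<bar>gg n x\<bar> powr p \<partial>M) \<le> 1"
  proof (cases "aa n > 0")
    case True
    note g = aa_pos_good[OF True]
    have uf: "UI n < \<infinity>" using g(1) unfolding good_def by auto
    note E = ext_u[OF A_M subset_refl UI_int(1)[OF uf], of "1 / Ur n powr (1/p)"]
    have "(\<integral>x. \<bar>gg n x\<bar> powr p \<partial>M) = \<bar>1 / Ur n powr (1/p)\<bar> powr p * Ur n"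
      using E(2) True unfolding gg_def UI_int(2)[OF uf, symmetric] by simp
    also have "\<dots> = 1" using g(3) pf by (simp add: powr_divide powr_powr)
    finally show ?thesis using E(1) True unfolding gg_def by simp
  next
    case False
    then show ?thesis unfolding gg_def using memLp_zero[of p M, OF pf] pf by simp
  qed
  then show "memLp p M (gg n)" "(\<integral>x. \<bar>gg n x\<bar> powr p \<partial>M) \<le> 1" by auto
qed

lemma hh_props:
  shows "hh n \<in> borel_measurable M" and "integrable M (\<lambda>x. \<bar>hh n x\<bar> powr q)"
    and "(\<integral>x. \<bar>hh n x\<bar> powr q \<partial>M) \<le> 1"
proof -
  have pf: "p > 1" "q > 0" "(p - 1) * q = p" using pq_facts p_gt by auto
  have "(\<lambda>x. (1 / Wr n powr (1/q)) * (sgn (w x) * \<bar>w x\<bar> powr (p - 1)) * indicator (A n) x) \<in> borel_measurable M"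
    by measurable
  then show "hh n \<in> borel_measurable M" unfolding hh_def by simp
  have "integrable M (\<lambda>x. \<bar>hh n x\<bar> powr q) \<and> (\<integral>x. \<bar>hh n x\<bar> powr q \<partial>M) \<le> 1"
  proof (cases "aa n > 0")
    case True
    note g = aa_pos_good[OF True]
    have wf: "WI n < \<infinity>" using g(1) unfolding good_def by auto
    define c where "c = 1 / Wr n powr (1/q)"
    have pw: "\<bar>hh n x\<bar> powr q = \<bar>c\<bar> powr q * (\<bar>w x\<bar> powr p * indicator (A n) x)" for x
    proof (cases "x \<in> A n")
      case xA: True
      have e: "hh n x = c * (sgn (w x) * \<bar>w x\<bar> powr (p - 1))" unfolding hh_def c_def using True xA by simp
      have "\<bar>hh n x\<bar> powr q = \<bar>c\<bar> powr q * \<bar>sgn (w x) * \<bar>w x\<bar> powr (p - 1)\<bar> powr q"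
        unfolding e by (rule abs_powr_mult)
      then show ?thesis using sgn_pow(1)[OF pf(3) pf(1), of "w x"] xA by simp
    next
      case False
      then show ?thesis using hh_supp[OF False] pf by simp
    qed
    have "(\<integral>x. \<bar>hh n x\<bar> powr q \<partial>M) = \<bar>c\<bar> powr q * Wr n"
      unfolding pw WI_int(2)[OF wf] by simp
    also have "\<dots> = 1" unfolding c_def using g(2) pf by (simp add: powr_divide powr_powr)
    finally show ?thesis unfolding pw using WI_int(1)[OF wf] by simp
  next
    case False
    then show ?thesis unfolding hh_def using pf by simp
  qed
  then show "integrable M (\<lambda>x. \<bar>hh n x\<bar> powr q)" "(\<integral>x. \<bar>hh n x\<bar> powr q \<partial>M) \<le> 1" by auto
qed

lemma hh_T_gg: "(\<integral>x. hh n x * T (gg n) x \<partial>M) = aa n"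
proof (cases "aa n > 0")
  case True
  have pf: "p > 1" "q > 0" "(p - 1) * q = p" "1/q = 1 - 1/p" using pq_facts p_gt by auto
  note g = aa_pos_good[OF True]
  have uf: "UI n < \<infinity>" and wf: "WI n < \<infinity>" using g(1) unfolding good_def by auto
  define c where "c = 1 / Ur n powr (1/p)"
  define c' where "c' = 1 / Wr n powr (1/q)"
  note E = ext_u[OF A_M subset_refl UI_int(1)[OF uf], of c]
  have ggc: "gg n = (\<lambda>x. c * (sgn (u x) * \<bar>u x\<bar> powr (q - 1)) * indicator (A n) x)"
    unfolding gg_def c_def using True by simp
  have cU: "c * Ur n = Ur n powr (1/q)"
  proof -
    have "Ur n powr (1/q) = Ur n powr 1 / Ur n powr (1/p)" unfolding pf(4) by (rule powr_diff)
    then show ?thesis unfolding c_def using g(3) by simp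
  qed
  have Tg: "AE x in M. x \<in> A n \<longrightarrow> T (gg n) x = w x * (Ur n powr (1/q) / mu n)"
    using E(3) unfolding ggc UI_int(2)[OF uf, symmetric] cU .
  have [measurable]: "hh n \<in> borel_measurable M" by (rule hh_props(1))
  have [measurable]: "T (gg n) \<in> borel_measurable M"
    using bdd gg_props(1)[of n] unfolding bounded_op_Lp_def memLp_def by blast
  have hw: "hh n x * w x = c' * (\<bar>w x\<bar> powr p * indicator (A n) x)" for x
    unfolding hh_def c'_def using True sgn_pow(2)[OF pf(3) pf(1), of "w x"]
    by (cases "x \<in> A n") (simp_all add: algebra_simps)
  have ae: "AE x in M. hh n x * T (gg n) x = (Ur n powr (1/q) / mu n) * (c' * (\<bar>w x\<bar> powr p * indicator (A n) x))"
    using Tg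
  proof eventually_elim
    case (elim x)
    show ?case
    proof (cases "x \<in> A n")
      case True
      then have "hh n x * T (gg n) x = (Ur n powr (1/q) / mu n) * (hh n x * w x)" using elim by simp
      then show ?thesis unfolding hw .
    next
      case False
      then show ?thesis using hh_supp[OF False] by simp
    qed
  qed
  have "(\<integral>x. hh n x * T (gg n) x \<partial>M) = (\<integral>x. (Ur n powr (1/q) / mu n) * (c' * (\<bar>w x\<bar> powr p * indicator (A n) x)) \<partial>M)"
    by (rule integral_cong_AE) (use ae in \<open>auto elim: eventually_mono\<close>)
  also have "\<dots> = (Ur n powr (1/q) / mu n) * (c' * Wr n)" unfolding WI_int(2)[OF wf] by simp
  also have "c' * Wr n = Wr n powr (1/p)"
  proof -
    have "1/p = 1 - 1/q" using pf(4) by simp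
    then have "Wr n powr (1/p) = Wr n powr 1 / Wr n powr (1/q)" by (simp add: powr_diff)
    then show ?thesis unfolding c'_def using g(2) by simp
  qed
  finally show ?thesis unfolding aa_def by simp
next
  case False
  then have "aa n = 0" using aa_nonneg[of n] by simp
  then show ?thesis unfolding hh_def using False by simp
qed

lemma block_bound:
  assumes phi: "Lp_functional p M \<phi>" and y: "memLp p M y"
  shows "\<bar>\<Sum>n<N. \<phi> (gg n) * (\<integral>x. hh n x * y x \<partial>M)\<bar> \<le> dual_norm p M \<phi> * Lp_norm p M y"
proof -
  have pf: "p > 0" using pq_facts by auto
  have [measurable]: "y \<in> borel_measurable M" and yi: "integrable M (\<lambda>x. \<bar>y x\<bar> powr p)"
    using y unfolding memLp_def by auto
  have [measurable]: "hh n \<in> borel_measurable M" for n by (rule hh_props(1))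
  have ggm[measurable]: "gg n \<in> borel_measurable M" for n using gg_props(1)[of n] unfolding memLp_def by auto
  define c where "c n = (\<integral>x. hh n x * y x \<partial>M)" for n
  define G where "G = (\<lambda>x. \<Sum>n<N. c n * gg n x)"
  have Gm: "memLp p M G" unfolding G_def by (rule phi_sum(1)[OF phi pf gg_props(1)])
  have phiG: "\<phi> G = (\<Sum>n<N. c n * \<phi> (gg n))" unfolding G_def by (rule phi_sum(2)[OF phi pf gg_props(1)])
  have cn: "\<bar>c n\<bar> powr p \<le> (\<integral>x. \<bar>y x\<bar> powr p * indicator (A n) x \<partial>M)" for n
  proof -
    define J where "J = (\<integral>x. \<bar>y x\<bar> powr p * indicator (A n) x \<partial>M)"
    have J0: "J \<ge> 0" unfolding J_def by simp
    have e: "\<bar>y x * indicator (A n) x\<bar> powr p = \<bar>y x\<bar> powr p * indicator (A n) x" for x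
      using pf by (auto simp: indicator_def)
    have yAi: "integrable M (\<lambda>x. \<bar>y x * indicator (A n) x\<bar> powr p)"
      unfolding e using yi by (intro integrable_real_mult_indicator) auto
    note H = holder[OF p_gt pq _ _ yAi hh_props(2)[of n]]
    have e2: "y x * indicator (A n) x * hh n x = hh n x * y x" for x
      using hh_supp[of x n] by (cases "x \<in> A n") auto
    have "\<bar>c n\<bar> \<le> (\<integral>x. \<bar>hh n x * y x\<bar> \<partial>M)" unfolding c_def by (rule integral_abs_bound)
    also have "\<dots> \<le> J powr (1/p) * (\<integral>x. \<bar>hh n x\<bar> powr q \<partial>M) powr (1/q)"
      using H(2) unfolding e2 e J_def by simp
    also have "\<dots> \<le> J powr (1/p) * 1"
      by (rule mult_left_mono) (use hh_props(3)[of n] pq_facts p_gt in \<open>auto intro!: powr_le1\<close>)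
    finally have "\<bar>c n\<bar> \<le> J powr (1/p)" by simp
    then have "\<bar>c n\<bar> powr p \<le> (J powr (1/p)) powr p" by (intro powr_mono2) (use pf in auto)
    also have "\<dots> = J" using J0 pf by (simp add: powr_powr)
    finally show ?thesis unfolding J_def .
  qed
  have pwG: "\<bar>G x\<bar> powr p = (\<Sum>n<N. \<bar>c n\<bar> powr p * \<bar>gg n x\<bar> powr p)" if xs: "x \<in> space M" for x
  proof -
    obtain m where xm: "x \<in> A m" using A_exists[OF xs] by auto
    have z: "k \<noteq> m \<Longrightarrow> gg k x = 0" for k using gg_supp A_unique[OF xm] by blast
    have "G x = (if m < N then c m * gg m x else 0)" unfolding G_def by (rule sum_single) (use z in simp)
    moreover have "(\<Sum>n<N. \<bar>c n\<bar> powr p * \<bar>gg n x\<bar> powr p) = (if m < N then \<bar>c m\<bar> powr p * \<bar>gg m x\<bar> powr p else 0)"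
      by (rule sum_single) (use z pf in simp)
    ultimately show ?thesis using pf by (simp add: abs_powr_mult)
  qed
  have ggi: "integrable M (\<lambda>x. \<bar>c n\<bar> powr p * \<bar>gg n x\<bar> powr p)" for n
    using gg_props(1)[of n] unfolding memLp_def by simp
  have "(\<integral>x. \<bar>G x\<bar> powr p \<partial>M) = (\<integral>x. (\<Sum>n<N. \<bar>c n\<bar> powr p * \<bar>gg n x\<bar> powr p) \<partial>M)"
    by (rule Bochner_Integration.integral_cong) (use pwG in auto)
  also have "\<dots> = (\<Sum>n<N. \<bar>c n\<bar> powr p * (\<integral>x. \<bar>gg n x\<bar> powr p \<partial>M))"
    by (subst Bochner_Integration.integral_sum) (use ggi in auto)
  also have "\<dots> \<le> (\<Sum>n<N. (\<integral>x. \<bar>y x\<bar> powr p * indicator (A n) x \<partial>M))"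
  proof (rule sum_mono)
    fix n
    have "\<bar>c n\<bar> powr p * (\<integral>x. \<bar>gg n x\<bar> powr p \<partial>M) \<le> \<bar>c n\<bar> powr p * 1"
      by (rule mult_left_mono) (use gg_props(2)[of n] in auto)
    then show "\<bar>c n\<bar> powr p * (\<integral>x. \<bar>gg n x\<bar> powr p \<partial>M) \<le> (\<integral>x. \<bar>y x\<bar> powr p * indicator (A n) x \<partial>M)"
      using cn[of n] by simp
  qed
  also have "\<dots> = (\<integral>x. (\<Sum>n<N. \<bar>y x\<bar> powr p * indicator (A n) x) \<partial>M)"
    by (subst Bochner_Integration.integral_sum) (use yi in \<open>auto intro!: integrable_real_mult_indicator\<close>)
  also have "\<dots> \<le> (\<integral>x. \<bar>y x\<bar> powr p \<partial>M)"
  proof (rule integral_mono)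
    show "integrable M (\<lambda>x. \<Sum>n<N. \<bar>y x\<bar> powr p * indicator (A n) x)"
      by (rule Bochner_Integration.integrable_sum) (use yi in \<open>auto intro!: integrable_real_mult_indicator\<close>)
    show "integrable M (\<lambda>x. \<bar>y x\<bar> powr p)" by (rule yi)
    fix x assume xs: "x \<in> space M"
    obtain m where xm: "x \<in> A m" using A_exists[OF xs] by auto
    have "(\<Sum>n<N. \<bar>y x\<bar> powr p * indicator (A n) x) = (if m < N then \<bar>y x\<bar> powr p * indicator (A m) x else 0)"
      by (rule sum_single) (use A_unique[OF xm] in \<open>auto simp: indicator_def\<close>)
    then show "(\<Sum>n<N. \<bar>y x\<bar> powr p * indicator (A n) x) \<le> \<bar>y x\<bar> powr p" by (auto simp: indicator_def)
  qed
  finally have "(\<integral>x. \<bar>G x\<bar> powr p \<partial>M) \<le> (\<integral>x. \<bar>y x\<bar> powr p \<partial>M)" .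
  then have LG: "Lp_norm p M G \<le> Lp_norm p M y" unfolding Lp_norm_def by (intro powr_mono2) (use pf in auto)
  have dn: "dual_norm p M \<phi> \<ge> 0" using dual_norm_props(1)[OF phi pf] .
  have "\<bar>\<Sum>n<N. \<phi> (gg n) * c n\<bar> = \<bar>\<phi> G\<bar>" unfolding phiG by (simp add: mult.commute)
  also have "\<dots> \<le> dual_norm p M \<phi> * Lp_norm p M G" by (rule dual_norm_props(2)[OF phi pf Gm])
  also have "\<dots> \<le> dual_norm p M \<phi> * Lp_norm p M y" by (rule mult_left_mono[OF LG dn])
  finally show ?thesis unfolding c_def .
qed

lemma necessity:
  assumes "nuclear_Lp p M T"
  shows "summable aa"
proof -
  have pf: "p > 0" using pq_facts by auto
  obtain \<phi> :: "nat \<Rightarrow> ('a \<Rightarrow> real) \<Rightarrow> real" and y :: "nat \<Rightarrow> 'a \<Rightarrow> real"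
    where phi: "\<And>n. Lp_functional p M (\<phi> n)" and ym: "\<And>n. memLp p M (y n)"
      and sd: "summable (\<lambda>n. dual_norm p M (\<phi> n) * Lp_norm p M (y n))"
      and cv: "\<And>f. memLp p M f \<Longrightarrow> (\<lambda>N. Lp_norm p M (\<lambda>x. T f x - (\<Sum>k<N. \<phi> k f * y k x))) \<longlonglongrightarrow> 0"
    using assms unfolding nuclear_Lp_def by blast
  define d where "d k = dual_norm p M (\<phi> k) * Lp_norm p M (y k)" for k
  have d0: "d k \<ge> 0" for k unfolding d_def
    using dual_norm_props(1)[OF phi pf] Lp_norm_nonneg[of p M "y k"] by simp
  have sd': "summable d" using sd unfolding d_def .
  have limn: "(\<lambda>K. \<Sum>k<K. \<phi> k (gg n) * (\<integral>x. hh n x * y k x \<partial>M)) \<longlonglongrightarrow> aa n" for n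
  proof -
    have gm: "memLp p M (gg n)" by (rule gg_props(1))
    have Tm: "memLp p M (T (gg n))" using bdd gm unfolding bounded_op_Lp_def by blast
    have [measurable]: "T (gg n) \<in> borel_measurable M" using Tm unfolding memLp_def by auto
    have [measurable]: "y k \<in> borel_measurable M" for k using ym[of k] unfolding memLp_def by auto
    have [measurable]: "hh n \<in> borel_measurable M" by (rule hh_props(1))
    note hi = hh_props(2)[of n]
    define R where "R K = (\<lambda>x. T (gg n) x - (\<Sum>k<K. \<phi> k (gg n) * y k x))" for K
    have Rm: "memLp p M (R K)" for K unfolding R_def
      by (rule memLp_diff[OF pf Tm memLp_sum[OF pf ym]])
    have Rmeas[measurable]: "R K \<in> borel_measurable M" for K using Rm[of K] unfolding memLp_def by auto
    have HR: "integrable M (\<lambda>x. R K x * hh n x)"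
      "(\<integral>x. \<bar>R K x * hh n x\<bar> \<partial>M) \<le> Lp_norm p M (R K) * (\<integral>x. \<bar>hh n x\<bar> powr q \<partial>M) powr (1/q)" for K
      using holder[OF p_gt pq _ _ _ hi, of "R K"] Rm[of K] unfolding memLp_def Lp_norm_def by auto
    have HT: "integrable M (\<lambda>x. T (gg n) x * hh n x)"
      using holder(1)[OF p_gt pq _ _ _ hi, of "T (gg n)"] Tm unfolding memLp_def by auto
    have HY: "integrable M (\<lambda>x. y k x * hh n x)" for k
      using holder(1)[OF p_gt pq _ _ _ hi, of "y k"] ym[of k] unfolding memLp_def by auto
    define S where "S K = (\<Sum>k<K. \<phi> k (gg n) * (\<integral>x. hh n x * y k x \<partial>M))" for K
    have DK: "aa n - S K = (\<integral>x. R K x * hh n x \<partial>M)" for K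
    proof -
      have pw: "R K x * hh n x = T (gg n) x * hh n x - (\<Sum>k<K. \<phi> k (gg n) * (y k x * hh n x))" for x
        unfolding R_def by (simp add: left_diff_distrib sum_distrib_right mult.assoc)
      have "(\<integral>x. R K x * hh n x \<partial>M) = (\<integral>x. T (gg n) x * hh n x \<partial>M) - (\<integral>x. (\<Sum>k<K. \<phi> k (gg n) * (y k x * hh n x)) \<partial>M)"
        unfolding pw by (rule Bochner_Integration.integral_diff[OF HT]) (use HY in auto)
      also have "(\<integral>x. (\<Sum>k<K. \<phi> k (gg n) * (y k x * hh n x)) \<partial>M) = (\<Sum>k<K. \<phi> k (gg n) * (\<integral>x. y k x * hh n x \<partial>M))"
        by (subst Bochner_Integration.integral_sum) (use HY in auto)
      also have "(\<integral>x. T (gg n) x * hh n x \<partial>M) = aa n" using hh_T_gg[of n] by (simp add: mult.commute)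
      finally show ?thesis unfolding S_def by (simp add: mult.commute)
    qed
    have bnd: "norm (aa n - S K) \<le> Lp_norm p M (R K)" for K
    proof -
      have "norm (aa n - S K) \<le> (\<integral>x. \<bar>R K x * hh n x\<bar> \<partial>M)" unfolding DK by simp
      also have "\<dots> \<le> Lp_norm p M (R K) * (\<integral>x. \<bar>hh n x\<bar> powr q \<partial>M) powr (1/q)" by (rule HR(2))
      also have "\<dots> \<le> Lp_norm p M (R K) * 1"
        by (rule mult_left_mono) (use hh_props(3)[of n] pq_facts p_gt in \<open>auto intro!: powr_le1 simp: Lp_norm_nonneg\<close>)
      finally show ?thesis by simp
    qed
    have "(\<lambda>K. aa n - S K) \<longlonglongrightarrow> 0"
      by (rule Lim_null_comparison[OF always_eventually cv[OF gm, folded R_def]]) (use bnd in auto)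
    then have "(\<lambda>K. aa n - (aa n - S K)) \<longlonglongrightarrow> aa n - 0" by (intro tendsto_diff tendsto_const)
    then show ?thesis unfolding S_def by simp
  qed
  have partial: "(\<Sum>n<N. aa n) \<le> suminf d" for N
  proof -
    have lim: "(\<lambda>K. \<Sum>n<N. \<Sum>k<K. \<phi> k (gg n) * (\<integral>x. hh n x * y k x \<partial>M)) \<longlonglongrightarrow> (\<Sum>n<N. aa n)"
      by (rule tendsto_sum) (rule limn)
    have "(\<Sum>n<N. \<Sum>k<K. \<phi> k (gg n) * (\<integral>x. hh n x * y k x \<partial>M)) \<le> suminf d" for K
    proof -
      have "(\<Sum>n<N. \<Sum>k<K. \<phi> k (gg n) * (\<integral>x. hh n x * y k x \<partial>M))
          = (\<Sum>k<K. \<Sum>n<N. \<phi> k (gg n) * (\<integral>x. hh n x * y k x \<partial>M))" by (rule sum.swap)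
      also have "\<dots> \<le> (\<Sum>k<K. d k)"
      proof (rule sum_mono)
        fix k
        show "(\<Sum>n<N. \<phi> k (gg n) * (\<integral>x. hh n x * y k x \<partial>M)) \<le> d k"
        proof -
          have "\<bar>\<Sum>n<N. \<phi> k (gg n) * (\<integral>x. hh n x * y k x \<partial>M)\<bar> \<le> d k"
            using block_bound[OF phi[of k] ym[of k], of N] unfolding d_def .
          then show ?thesis by linarith
        qed
      qed
      also have "\<dots> \<le> suminf d" by (rule sum_le_suminf[OF sd']) (use d0 in auto)
      finally show ?thesis .
    qed
    then show ?thesis by (intro LIMSEQ_le_const2[OF lim]) auto
  qed
  show "summable aa"
  proof (rule bounded_imp_summable)
    show "0 \<le> aa n" for n by (rule aa_nonneg)
    show "(\<Sum>k\<le>n. aa k) \<le> suminf d" for n using partial[of "Suc n"] by (simp add: lessThan_Suc_atMost)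
  qed
qed

end


theorem proposition2p5:
  fixes M F :: "'a measure" and p q :: real and w u :: "'a \<Rightarrow> real" and A :: "nat \<Rightarrow> 'a set"
  assumes "complete_measure M"
    and "sigma_finite_measure M"
    and "sigma_finite_subalgebra M F"
    and "1 < p" and "1 / p + 1 / q = 1"
    and "w \<in> borel_measurable M" and "u \<in> borel_measurable M"
    and "\<And>n. F_atom M F (A n)"
    and "disjoint_family A"
    and "(\<Union>n. A n) = space M"
    and "bounded_op_Lp p M (WCE M F w u)"
  shows "nuclear_Lp p M (WCE M F w u) \<longleftrightarrow>
    summable (\<lambda>n. cond_exp_atom M (\<lambda>x. \<bar>w x\<bar> powr p) (A n) powr (1 / p)
                 * cond_exp_atom M (\<lambda>x. \<bar>u x\<bar> powr q) (A n) powr (1 / q))"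
proof -
  interpret W: wce_setting M F A p q w u
  proof (rule wce_setting.intro)
    show "atom_setting M F A" by (rule atom_setting.intro) (use assms in blast)+
    show "wce_setting_axioms M F p q w u" by (rule wce_setting_axioms.intro) (use assms in blast)+
  qed
  have e: "(\<lambda>n. cond_exp_atom M (\<lambda>x. \<bar>w x\<bar> powr p) (A n) powr (1 / p)
                 * cond_exp_atom M (\<lambda>x. \<bar>u x\<bar> powr q) (A n) powr (1 / q)) = W.aa"
    unfolding W.aa_def by (rule ext, rule W.a_eq)
  show ?thesis unfolding e using W.sufficiency W.necessity by blast
qed

end
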